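(* Assume there exists a $1$-perfect code in $H(q+1,q)$. Let $f$ be a $(b,c)$-coloring of $H(n,q)$ with main eigenvalue $\lambda$ such that the set of vertices of color $1$ can be partitioned into $k$-faces. Then: (1) if $\lambda+k\le0$, then for every $t\in\{1,\dots,q\}$ there is a $(q(b+c)-tc,\ tc)$-coloring of $H(qn-\lambda-k,q)$, with main eigenvalue $\lambda-k(q-1)$; (2) if $\lambda\le k(q-1)$, then for every $t\in\{1,\dots,q\}$ there is a $(q(b+c)-tc,\ tc)$-coloring of $H(qn-\lambda+k(q-1),q)$, with main eigenvalue $\lambda+k(q-1)^2$.
   Context: The Hamming graph $H(n,q)$ has vertex set $\mathbb{Z}_q^n$, two vertices adjacent iff they differ in exactly one coordinate. A $k$-face is a set of vertices obtained by fixing $n-k$ coordinates and letting the other $k$ coordinates range over $\mathbb{Z}_q$. A $(b,c)$-coloring of $H(n,q)$ is a surjective map onto $\{1,2\}$ in which each color-1 vertex has exactly $b$ neighbours of color 2 and each color-2 vertex has exactly $c$ neighbours of color 1; its main eigenvalue is $\lambda=n(q-1)-(b+c)$. A $1$-perfect code in $H(n,q)$ is a set $C$ of vertices such that every radius-$1$ Hamming ball contains exactly one element of $C$. *)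

theory Defs
  imports Main
begin

definition ham_vertices :: "nat \<Rightarrow> nat \<Rightarrow> nat list set" where
  "ham_vertices n q = {x. length x = n \<and> (\<forall>i<n. x ! i < q)}"

definition ham_adj :: "nat list \<Rightarrow> nat list \<Rightarrow> bool" where
  "ham_adj x y \<longleftrightarrow> length x = length y \<and> card {i. i < length x \<and> x ! i \<noteq> y ! i} = 1"

definition ham_nbrs :: "nat \<Rightarrow> nat \<Rightarrow> nat list \<Rightarrow> nat list set" where
  "ham_nbrs n q x = {y \<in> ham_vertices n q. ham_adj x y}"

definition is_coloring :: "nat \<Rightarrow> nat \<Rightarrow> nat \<Rightarrow> nat \<Rightarrow> (nat list \<Rightarrow> nat) \<Rightarrow> bool" where
  "is_coloring n q b c f \<longleftrightarrow>
     f ` ham_vertices n q = {1, 2} \<and>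
     (\<forall>x\<in>ham_vertices n q. f x = 1 \<longrightarrow> card {y \<in> ham_nbrs n q x. f y = 2} = b) \<and>
     (\<forall>x\<in>ham_vertices n q. f x = 2 \<longrightarrow> card {y \<in> ham_nbrs n q x. f y = 1} = c)"

definition main_eigenvalue :: "nat \<Rightarrow> nat \<Rightarrow> nat \<Rightarrow> nat \<Rightarrow> int" where
  "main_eigenvalue n q b c = int n * (int q - 1) - (int b + int c)"

definition is_face :: "nat \<Rightarrow> nat \<Rightarrow> nat \<Rightarrow> nat list set \<Rightarrow> bool" where
  "is_face n q k F \<longleftrightarrow> (\<exists>K x. K \<subseteq> {..<n} \<and> card K = k \<and> x \<in> ham_vertices n q \<and>
      F = {y \<in> ham_vertices n q. \<forall>i<n. i \<notin> K \<longrightarrow> y ! i = x ! i})"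

definition face_partitionable :: "nat \<Rightarrow> nat \<Rightarrow> nat \<Rightarrow> nat list set \<Rightarrow> bool" where
  "face_partitionable n q k S \<longleftrightarrow> (\<exists>P. (\<forall>F\<in>P. is_face n q k F) \<and>
      (\<forall>F\<in>P. \<forall>G\<in>P. F \<noteq> G \<longrightarrow> F \<inter> G = {}) \<and> \<Union>P = S)"

definition perfect_code1 :: "nat \<Rightarrow> nat \<Rightarrow> nat list set \<Rightarrow> bool" where
  "perfect_code1 n q C \<longleftrightarrow> C \<subseteq> ham_vertices n q \<and>
     (\<forall>x\<in>ham_vertices n q. card (C \<inter> ({x} \<union> ham_nbrs n q x)) = 1)"

end

theory Submission
  imports Defs "HOL-Number_Theory.Cong"
begin

lemma diff_upd_single:
  assumes "p < length x" "a \<noteq> x!p"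
  shows "{i. i < length x \<and> x!i \<noteq> x[p:=a]!i} = {p}"
  using assms by (auto simp: nth_list_update)

lemma upd_in_ham:
  assumes "x \<in> ham_vertices n q" "a < q"
  shows "x[p:=a] \<in> ham_vertices n q"
  unfolding ham_vertices_def
proof (intro CollectI conjI allI impI)
  show "length (x[p:=a]) = n" using assms by (simp add: ham_vertices_def)
  fix i assume "i < n"
  then show "x[p:=a]!i < q" using assms by (cases "i = p") (auto simp: ham_vertices_def)
qed

lemma ham_nbrs_char:
  assumes "x \<in> ham_vertices n q"
  shows "ham_nbrs n q x = {x[p:=a] | p a. p<n \<and> a<q \<and> a \<noteq> x!p}"
proof
  show "ham_nbrs n q x \<subseteq> {x[p:=a] | p a. p<n \<and> a<q \<and> a \<noteq> x!p}"
  proof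
    fix y assume y: "y \<in> ham_nbrs n q x"
    then have yv: "y \<in> ham_vertices n q" and adj: "ham_adj x y" by (auto simp: ham_nbrs_def)
    have lx: "length x = n" "length y = n" using assms yv by (auto simp: ham_vertices_def)
    from adj have "card {i. i < length x \<and> x!i \<noteq> y!i} = 1" unfolding ham_adj_def by blast
    then obtain p where D: "{i. i < length x \<and> x!i \<noteq> y!i} = {p}"
      by (auto simp: card_1_singleton_iff)
    have pn: "p < n" "x!p \<noteq> y!p" using D lx by auto
    have "y = x[p := y!p]"
    proof (rule nth_equalityI)
      show "length y = length (x[p := y!p])" using lx by simp
      fix i assume i: "i < length y"
      show "y!i = x[p:=y!p]!i"
      proof (cases "i = p")
        case True then show ?thesis using pn lx by simp
      next
        case False
        then have "i \<notin> {i. i < length x \<and> x!i \<noteq> y!i}" using D by blast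
        then show ?thesis using False i lx by simp
      qed
    qed
    moreover have "y!p < q" using yv pn by (auto simp: ham_vertices_def)
    ultimately show "y \<in> {x[p:=a] | p a. p<n \<and> a<q \<and> a \<noteq> x!p}" using pn by fastforce
  qed
next
  show "{x[p:=a] | p a. p<n \<and> a<q \<and> a \<noteq> x!p} \<subseteq> ham_nbrs n q x"
  proof
    fix y assume "y \<in> {x[p:=a] | p a. p<n \<and> a<q \<and> a \<noteq> x!p}"
    then obtain p a where y: "y = x[p:=a]" "p<n" "a<q" "a \<noteq> x!p" by blast
    have lx: "length x = n" using assms by (auto simp: ham_vertices_def)
    have "y \<in> ham_vertices n q" using upd_in_ham[OF assms y(3)] y(1) by simp
    moreover have "ham_adj x y" unfolding ham_adj_def using diff_upd_single[of p x a] y lx by simp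
    ultimately show "y \<in> ham_nbrs n q x" by (simp add: ham_nbrs_def)
  qed
qed

lemma card_nbrs_pred:
  assumes "x \<in> ham_vertices n q"
  shows "card {y \<in> ham_nbrs n q x. P y} = (\<Sum>p<n. card {a. a<q \<and> a \<noteq> x!p \<and> P (x[p:=a])})"
proof -
  have lx: "length x = n" using assms by (auto simp: ham_vertices_def)
  let ?S = "Sigma {..<n} (\<lambda>p. {a. a<q \<and> a \<noteq> x!p \<and> P (x[p:=a])})"
  have inj: "inj_on (\<lambda>(p,a). x[p:=a]) ?S"
  proof (rule inj_onI)
    fix u v assume u: "u \<in> ?S" and v: "v \<in> ?S" and e0: "(\<lambda>(p,a). x[p:=a]) u = (\<lambda>(p,a). x[p:=a]) v"
    obtain p a where pa: "u = (p,a)" by (cases u)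
    obtain p' a' where pa': "v = (p',a')" by (cases v)
    have h: "p<n" "p'<n" "a \<noteq> x!p" "a' \<noteq> x!p'" using u v pa pa' by auto
    have e: "x[p:=a] = x[p':=a']" using e0 pa pa' by simp
    have "p = p'"
    proof (rule ccontr)
      assume ne: "p \<noteq> p'"
      have "x[p:=a]!p = x[p':=a']!p" using e by simp
      then show False using ne h lx by simp
    qed
    moreover have "a = a'"
    proof -
      have "x[p:=a]!p = x[p':=a']!p" using e by simp
      then show ?thesis using \<open>p = p'\<close> h lx by simp
    qed
    ultimately show "u = v" using pa pa' by simp
  qed
  have img: "(\<lambda>(p,a). x[p:=a]) ` ?S = {y \<in> ham_nbrs n q x. P y}"
    unfolding ham_nbrs_char[OF assms] by auto
  have "card {y \<in> ham_nbrs n q x. P y} = card ?S" using card_image[OF inj] img by simp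
  also have "\<dots> = (\<Sum>p<n. card {a. a<q \<and> a \<noteq> x!p \<and> P (x[p:=a])})"
    by (rule card_SigmaI) auto
  finally show ?thesis .
qed

lemma card_neq: "a < q \<Longrightarrow> card {b. b < q \<and> b \<noteq> a} = q - 1"
proof -
  assume "a < q"
  have "{b. b < q \<and> b \<noteq> a} = {..<q} - {a}" by auto
  then show ?thesis using \<open>a<q\<close> by simp
qed

lemma card_nbrs:
  assumes "x \<in> ham_vertices n q"
  shows "card (ham_nbrs n q x) = n * (q - 1)"
proof -
  have lx: "\<forall>p<n. x!p < q" using assms by (auto simp: ham_vertices_def)
  have "card (ham_nbrs n q x) = card {y \<in> ham_nbrs n q x. True}" by simp
  also have "\<dots> = (\<Sum>p<n. card {a. a<q \<and> a \<noteq> x!p \<and> True})" by (rule card_nbrs_pred[OF assms])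
  also have "\<dots> = (\<Sum>p<n. q - 1)" using lx card_neq by (intro sum.cong) auto
  finally show ?thesis by simp
qed

lemma ham_vertices_Suc:
  "ham_vertices (Suc n) q = (\<lambda>(a,x). a # x) ` ({..<q} \<times> ham_vertices n q)"
proof (rule set_eqI)
  fix y show "y \<in> ham_vertices (Suc n) q \<longleftrightarrow> y \<in> (\<lambda>(a,x). a # x) ` ({..<q} \<times> ham_vertices n q)"
  proof
    assume yv: "y \<in> ham_vertices (Suc n) q"
    then have ly: "length y = Suc n" and yq: "\<forall>i<Suc n. y!i < q" by (auto simp: ham_vertices_def)
    then obtain a x where yax: "y = a # x" by (cases y) auto
    have "a < q" using yq yax by force
    moreover have "x \<in> ham_vertices n q"
    proof -
      have "length x = n" using ly yax by simp
      moreover have "\<forall>i<n. x!i < q"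
      proof (intro allI impI)
        fix i assume "i < n"
        then have "y!(Suc i) < q" using yq by simp
        then show "x!i < q" using yax by simp
      qed
      ultimately show ?thesis by (simp add: ham_vertices_def)
    qed
    ultimately show "y \<in> (\<lambda>(a,x). a # x) ` ({..<q} \<times> ham_vertices n q)"
      using yax by blast
  next
    assume "y \<in> (\<lambda>(a,x). a # x) ` ({..<q} \<times> ham_vertices n q)"
    then obtain a x where yax: "y = a # x" "a < q" "x \<in> ham_vertices n q" by auto
    show "y \<in> ham_vertices (Suc n) q"
      unfolding ham_vertices_def
    proof (intro CollectI conjI allI impI)
      show "length y = Suc n" using yax by (simp add: ham_vertices_def)
      fix i assume "i < Suc n"
      then show "y!i < q" using yax by (cases i) (auto simp: ham_vertices_def)
    qed
  qed
qed

lemma card_ham_vertices: "finite (ham_vertices n q) \<and> card (ham_vertices n q) = q ^ n"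
proof (induction n)
  case 0
  have "ham_vertices 0 q = {[]}" by (auto simp: ham_vertices_def)
  then show ?case by simp
next
  case (Suc n)
  have inj: "inj_on (\<lambda>(a,x). a # x) ({..<q} \<times> ham_vertices n q)" by (auto simp: inj_on_def)
  show ?case unfolding ham_vertices_Suc using Suc card_image[OF inj]
    by (simp add: card_cartesian_product)
qed

lemma mod_add_inj: "(x + z) mod q = (y + z) mod (q::nat) \<Longrightarrow> x < q \<Longrightarrow> y < q \<Longrightarrow> x = y"
proof -
  assume h: "(x + z) mod q = (y + z) mod q" "x < q" "y < q"
  then have "[x + z = y + z] (mod q)" by (simp add: cong_def)
  then have "[x = y] (mod q)" by (simp add: cong_add_rcancel_nat)
  then show ?thesis using h by (simp add: cong_def)
qed

lemma mod_add_inj2: "(z + x) mod q = (z + y) mod (q::nat) \<Longrightarrow> x < q \<Longrightarrow> y < q \<Longrightarrow> x = y"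
  using mod_add_inj[of x z q y] by (simp add: add.commute)

lemma rot_perm:
  assumes "0 < (q::nat)"
  shows "(\<lambda>r. (X + r) mod q) ` {..<q} = {..<q}" "inj_on (\<lambda>r. (X + r) mod q) {..<q}"
proof -
  show inj: "inj_on (\<lambda>r. (X + r) mod q) {..<q}"
    by (rule inj_onI) (auto intro: mod_add_inj2)
  show "(\<lambda>r. (X + r) mod q) ` {..<q} = {..<q}"
    by (rule endo_inj_surj) (use assms inj in auto)
qed

lemma card_rot:
  assumes "0 < (q::nat)"
  shows "card {r. r < q \<and> P ((X + r) mod q)} = card {y. y < q \<and> P y}"
proof -
  have sub: "{r. r < q \<and> P ((X + r) mod q)} \<subseteq> {..<q}" by auto
  have inj: "inj_on (\<lambda>r. (X + r) mod q) {r. r < q \<and> P ((X + r) mod q)}"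
    using inj_on_subset[OF rot_perm(2)[OF assms] sub] .
  have "(\<lambda>r. (X + r) mod q) ` {r. r < q \<and> P ((X + r) mod q)} = {y. y < q \<and> P y}"
  proof
    show "(\<lambda>r. (X + r) mod q) ` {r. r < q \<and> P ((X + r) mod q)} \<subseteq> {y. y < q \<and> P y}"
      using assms by auto
    show "{y. y < q \<and> P y} \<subseteq> (\<lambda>r. (X + r) mod q) ` {r. r < q \<and> P ((X + r) mod q)}"
    proof
      fix y assume y: "y \<in> {y. y < q \<and> P y}"
      then have "y \<in> (\<lambda>r. (X + r) mod q) ` {..<q}" using rot_perm(1)[OF assms] by auto
      then obtain r where "r < q" "y = (X + r) mod q" by auto
      then show "y \<in> (\<lambda>r. (X + r) mod q) ` {r. r < q \<and> P ((X + r) mod q)}" using y by auto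
    qed
  qed
  then show ?thesis using card_image[OF inj] by simp
qed

lemma count_lt: "0 < q \<Longrightarrow> t \<le> q \<Longrightarrow> card {r. r < q \<and> (X + r) mod q < t} = (t::nat)"
proof -
  assume "0 < q" "t \<le> q"
  then have "card {r. r < q \<and> (X + r) mod q < t} = card {y. y < q \<and> y < t}" using card_rot[where P="\<lambda>y. y < t" and X=X] by blast
  also have "{y. y < q \<and> y < t} = {..<t}" using \<open>t \<le> q\<close> by auto
  finally show ?thesis by simp
qed

lemma count_lt_ne:
  assumes "0 < q" "t \<le> q" "a < q"
  shows "card {r. r < q \<and> r \<noteq> a \<and> (X + r) mod q < t} + (if (X + a) mod q < t then 1 else 0) = (t::nat)"
proof -
  have fin: "finite {r. r < q \<and> (X + r) mod q < t}" by auto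
  have "{r. r < q \<and> r \<noteq> a \<and> (X + r) mod q < t} = {r. r < q \<and> (X + r) mod q < t} - {a}" by auto
  then show ?thesis using count_lt[OF assms(1,2), of X] assms(3) fin
    by (cases "(X + a) mod q < t") (auto simp: card_Diff_singleton)
qed

lemma adj_of_agree:
  assumes "length x = length y" "x \<noteq> y" "\<forall>i<length x. i \<noteq> j \<longrightarrow> x!i = y!i"
  shows "ham_adj x y"
proof -
  have sub: "{i. i < length x \<and> x!i \<noteq> y!i} \<subseteq> {j}" using assms(3) by auto
  have "{i. i < length x \<and> x!i \<noteq> y!i} \<noteq> {}"
  proof
    assume "{i. i < length x \<and> x!i \<noteq> y!i} = {}"
    then have "x = y" using assms(1) by (auto intro: nth_equalityI)
    then show False using assms(2) by simp
  qed
  then have "{i. i < length x \<and> x!i \<noteq> y!i} = {j}" using sub by blast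
  then show ?thesis unfolding ham_adj_def using assms(1) by simp
qed

lemma ham_adj_sym: "ham_adj x y \<Longrightarrow> ham_adj y x"
proof -
  assume h: "ham_adj x y"
  then have l: "length x = length y" by (simp add: ham_adj_def)
  have "{i. i < length y \<and> y!i \<noteq> x!i} = {i. i < length x \<and> x!i \<noteq> y!i}"
    using l by (metis (no_types, lifting))
  then show ?thesis using h l unfolding ham_adj_def by simp
qed

lemma not_adj_self: "\<not> ham_adj x x"
  unfolding ham_adj_def by simp

lemma ball_two_contra:
  assumes pc: "perfect_code1 n q C" and x: "x \<in> ham_vertices n q"
    and cc: "c \<in> C" "c' \<in> C" "c \<noteq> c'"
    and b: "c \<in> {x} \<union> ham_nbrs n q x" "c' \<in> {x} \<union> ham_nbrs n q x"
  shows False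
proof -
  have "card (C \<inter> ({x} \<union> ham_nbrs n q x)) = 1" using pc x by (simp add: perfect_code1_def)
  then obtain z where z: "C \<inter> ({x} \<union> ham_nbrs n q x) = {z}" by (auto simp: card_1_singleton_iff)
  have "c \<in> C \<inter> ({x} \<union> ham_nbrs n q x)" "c' \<in> C \<inter> ({x} \<union> ham_nbrs n q x)" using cc b by auto
  then have "c = z" "c' = z" using z by auto
  then show False using cc by simp
qed

lemma code_agree:
  assumes pc: "perfect_code1 n q C" and cc: "c \<in> C" "c' \<in> C"
    and ag: "\<forall>i<n. i \<noteq> i1 \<longrightarrow> i \<noteq> i2 \<longrightarrow> c!i = c'!i"
  shows "c = c'"
proof (rule ccontr)
  assume ne: "c \<noteq> c'"
  have CV: "C \<subseteq> ham_vertices n q" using pc by (simp add: perfect_code1_def)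
  have cv: "c \<in> ham_vertices n q" "c' \<in> ham_vertices n q" using CV cc by auto
  have lc: "length c = n" "length c' = n" using cv by (auto simp: ham_vertices_def)
  define m where "m = c[i1 := c'!i1]"
  have mv: "m \<in> ham_vertices n q"
  proof (cases "i1 < n")
    case True
    then have "c'!i1 < q" using cv by (auto simp: ham_vertices_def)
    then show ?thesis unfolding m_def using upd_in_ham[OF cv(1)] by blast
  next
    case False
    then have "m = c" unfolding m_def using lc by (simp add: list_update_beyond)
    then show ?thesis using cv by simp
  qed
  have lm: "length m = n" using lc by (simp add: m_def)
  have m1: "\<forall>i<n. i \<noteq> i1 \<longrightarrow> m!i = c!i" unfolding m_def by simp
  have m2: "\<forall>i<n. i \<noteq> i2 \<longrightarrow> m!i = c'!i"
  proof (intro allI impI)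
    fix i assume "i < n" "i \<noteq> i2"
    then show "m!i = c'!i" unfolding m_def using ag lc by (cases "i = i1") auto
  qed
  show False
  proof (cases "m = c")
    case True
    have "ham_adj c c'" using adj_of_agree[of c c' i2] m2 True lc ne by simp
    then have "c' \<in> ham_nbrs n q c" using cv by (simp add: ham_nbrs_def)
    then show False using ball_two_contra[OF pc cv(1) cc ne] by blast
  next
    case False
    show False
    proof (cases "m = c'")
      case True
      have "ham_adj c c'" using adj_of_agree[of c c' i1] m1 True lc ne by simp
      then have "c' \<in> ham_nbrs n q c" using cv by (simp add: ham_nbrs_def)
      then show False using ball_two_contra[OF pc cv(1) cc ne] by blast
    next
      case False2: False
      have "ham_adj m c" using adj_of_agree[of m c i1] m1 False lc lm by simp
      moreover have "ham_adj m c'" using adj_of_agree[of m c' i2] m2 False2 lc lm by simp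
      ultimately have "c \<in> ham_nbrs n q m" "c' \<in> ham_nbrs n q m" using cv by (auto simp: ham_nbrs_def)
      then show False using ball_two_contra[OF pc mv cc ne] by blast
    qed
  qed
qed

lemma card_filter_sum: "finite A \<Longrightarrow> card {a\<in>A. P a} = (\<Sum>a\<in>A. if P a then 1 else 0)"
  by (simp add: sum.inter_filter[symmetric])

lemma card_code:
  assumes pc: "perfect_code1 n q C"
  shows "card C * (1 + n * (q - 1)) = q ^ n"
proof -
  let ?V = "ham_vertices n q"
  let ?b = "\<lambda>x. insert x (ham_nbrs n q x)"
  have finV: "finite ?V" and cV: "card ?V = q ^ n" using card_ham_vertices by auto
  have CV: "C \<subseteq> ?V" using pc by (simp add: perfect_code1_def)
  have finC: "finite C" using finite_subset[OF CV finV] .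
  have one: "\<forall>x\<in>?V. card {c\<in>C. c \<in> ?b x} = 1"
  proof
    fix x assume "x \<in> ?V"
    then have "card (C \<inter> ({x} \<union> ham_nbrs n q x)) = 1" using pc by (simp add: perfect_code1_def)
    moreover have "C \<inter> ({x} \<union> ham_nbrs n q x) = {c\<in>C. c \<in> ?b x}" by auto
    ultimately show "card {c\<in>C. c \<in> ?b x} = 1" by simp
  qed
  have sym: "{x\<in>?V. c \<in> ?b x} = ?b c" if c: "c \<in> ?V" for c
  proof
    show "{x\<in>?V. c \<in> ?b x} \<subseteq> ?b c"
    proof
      fix x assume "x \<in> {x\<in>?V. c \<in> ?b x}"
      then have xv: "x \<in> ?V" and "c = x \<or> c \<in> ham_nbrs n q x" by auto
      then consider "c = x" | "ham_adj x c" by (auto simp: ham_nbrs_def)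
      then show "x \<in> ?b c"
      proof cases
        case 1 then show ?thesis by simp
      next
        case 2 then have "ham_adj c x" by (rule ham_adj_sym)
        then show ?thesis using xv by (simp add: ham_nbrs_def)
      qed
    qed
    show "?b c \<subseteq> {x\<in>?V. c \<in> ?b x}"
    proof
      fix x assume "x \<in> ?b c"
      then consider "x = c" | "x \<in> ?V" "ham_adj c x" by (auto simp: ham_nbrs_def)
      then show "x \<in> {x\<in>?V. c \<in> ?b x}"
      proof cases
        case 1 then show ?thesis using c by simp
      next
        case 2 then have "ham_adj x c" using ham_adj_sym by blast
        then show ?thesis using 2 c by (simp add: ham_nbrs_def)
      qed
    qed
  qed
  have cb: "card (?b c) = 1 + n * (q - 1)" if c: "c \<in> ?V" for c
  proof -
    have "c \<notin> ham_nbrs n q c" by (simp add: ham_nbrs_def not_adj_self)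
    moreover have "finite (ham_nbrs n q c)"
      using finite_subset[OF _ finV] by (auto simp: ham_nbrs_def)
    ultimately show ?thesis using card_nbrs[OF c] by simp
  qed
  have "(\<Sum>x\<in>?V. card {c\<in>C. c \<in> ?b x}) = (\<Sum>x\<in>?V. 1)"
    using one by (intro sum.cong refl) blast
  then have "q ^ n = (\<Sum>x\<in>?V. card {c\<in>C. c \<in> ?b x})" using cV by simp
  also have "\<dots> = (\<Sum>x\<in>?V. \<Sum>c\<in>C. if c \<in> ?b x then 1 else 0)"
    by (intro sum.cong refl card_filter_sum finC)
  also have "\<dots> = (\<Sum>c\<in>C. \<Sum>x\<in>?V. if c \<in> ?b x then 1 else 0)" by (rule sum.swap)
  also have "\<dots> = (\<Sum>c\<in>C. card {x\<in>?V. c \<in> ?b x})"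
    by (intro sum.cong refl card_filter_sum[symmetric] finV)
  also have "\<dots> = (\<Sum>c\<in>C. 1 + n * (q - 1))"
  proof (intro sum.cong refl)
    fix c assume "c \<in> C"
    then have "c \<in> ?V" using CV by blast
    then show "card {x\<in>?V. c \<in> ?b x} = 1 + n * (q - 1)" using sym cb by simp
  qed
  finally show ?thesis by simp
qed

lemma card_code_q:
  assumes pc: "perfect_code1 (Suc q) q C" and q: "1 \<le> q"
  shows "card C = q ^ (q - 1)"
proof -
  have e1: "card C * (1 + Suc q * (q - 1)) = q ^ Suc q" using card_code[OF pc] .
  have e2: "1 + Suc q * (q - 1) = q * q" using q
    by (cases q) (auto simp: algebra_simps)
  have e3: "q ^ Suc q = q ^ (q - 1) * (q * q)" using q
    by (cases q) (auto simp: algebra_simps)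
  have e: "card C * (q * q) = q ^ (q - 1) * (q * q)" using e1 unfolding e2 e3 .
  have "q * q \<noteq> 0" using q by simp
  then show ?thesis using e by (metis mult_right_cancel)
qed

lemma pre_inj:
  assumes pc: "perfect_code1 (Suc q) q C"
  shows "inj_on (take (q - 1)) C"
proof (rule inj_onI)
  fix c c' assume cc: "c \<in> C" "c' \<in> C" and e: "take (q - 1) c = take (q - 1) c'"
  have "\<forall>i<Suc q. i \<noteq> q - 1 \<longrightarrow> i \<noteq> q \<longrightarrow> c!i = c'!i"
  proof (intro allI impI)
    fix i assume i: "i < Suc q" "i \<noteq> q - 1" "i \<noteq> q"
    then have "i < q - 1" by linarith
    then have "take (q - 1) c ! i = take (q - 1) c' ! i" using e by simp
    then show "c!i = c'!i" using \<open>i < q - 1\<close> by simp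
  qed
  then show "c = c'" using code_agree[OF pc cc] by blast
qed

lemma pre_img:
  assumes pc: "perfect_code1 (Suc q) q C" and q: "1 \<le> q"
  shows "take (q - 1) ` C = ham_vertices (q - 1) q"
proof (rule card_subset_eq)
  show "finite (ham_vertices (q - 1) q)" using card_ham_vertices by blast
  have CV: "C \<subseteq> ham_vertices (Suc q) q" using pc by (simp add: perfect_code1_def)
  show "take (q - 1) ` C \<subseteq> ham_vertices (q - 1) q"
  proof
    fix u assume "u \<in> take (q - 1) ` C"
    then obtain c where c: "c \<in> C" "u = take (q - 1) c" by blast
    then have cv: "length c = Suc q" "\<forall>i<Suc q. c!i < q" using CV by (auto simp: ham_vertices_def)
    show "u \<in> ham_vertices (q - 1) q" unfolding ham_vertices_def
    proof (intro CollectI conjI allI impI)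
      show "length u = q - 1" using c cv by simp
      fix i assume "i < q - 1"
      then show "u!i < q" using c cv by simp
    qed
  qed
  show "card (take (q - 1) ` C) = card (ham_vertices (q - 1) q)"
    using card_image[OF pre_inj[OF pc]] card_code_q[OF pc q] card_ham_vertices by simp
qed

definition cw :: "nat list set \<Rightarrow> nat \<Rightarrow> nat list \<Rightarrow> nat list" where
  "cw C q B = (THE c. c \<in> C \<and> take (q - 1) c = take (q - 1) B)"

definition sfun :: "nat list set \<Rightarrow> nat \<Rightarrow> nat list \<Rightarrow> nat" where
  "sfun C q B = (B!(q - 1) + cw C q B ! (q - 1)) mod q"

definition psif :: "nat list set \<Rightarrow> nat \<Rightarrow> nat list \<Rightarrow> nat" where
  "psif C q B = cw C q B ! q"

lemma cw_spec:
  assumes pc: "perfect_code1 (Suc q) q C" and q: "1 \<le> q" and B: "B \<in> ham_vertices q q"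
  shows "cw C q B \<in> C" "take (q - 1) (cw C q B) = take (q - 1) B"
proof -
  have "take (q - 1) B \<in> ham_vertices (q - 1) q" using B by (auto simp: ham_vertices_def)
  then obtain c where c: "c \<in> C" "take (q - 1) c = take (q - 1) B"
    using pre_img[OF pc q] by (metis imageE)
  have uq: "c' = c" if h: "c' \<in> C \<and> take (q - 1) c' = take (q - 1) B" for c'
  proof -
    have "take (q - 1) c' = take (q - 1) c" using h c by simp
    then show ?thesis using inj_onD[OF pre_inj[OF pc]] h c by blast
  qed
  have "cw C q B = c" unfolding cw_def
  proof (rule the_equality)
    show "c \<in> C \<and> take (q - 1) c = take (q - 1) B" using c by simp
  qed (rule uq)
  then show "cw C q B \<in> C" "take (q - 1) (cw C q B) = take (q - 1) B" using c by auto
qed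

lemma cw_vert:
  assumes pc: "perfect_code1 (Suc q) q C" and q: "1 \<le> q" and B: "B \<in> ham_vertices q q"
  shows "length (cw C q B) = Suc q" "\<forall>i<Suc q. cw C q B ! i < q"
proof -
  have "cw C q B \<in> ham_vertices (Suc q) q" using cw_spec(1)[OF assms] pc by (auto simp: perfect_code1_def)
  then show "length (cw C q B) = Suc q" "\<forall>i<Suc q. cw C q B ! i < q" by (auto simp: ham_vertices_def)
qed

lemma cw_pre:
  assumes pc: "perfect_code1 (Suc q) q C" and q: "1 \<le> q" and B: "B \<in> ham_vertices q q"
    and i: "i < q - 1"
  shows "cw C q B ! i = B ! i"
proof -
  have "take (q - 1) (cw C q B) ! i = take (q - 1) B ! i" using cw_spec(2)[OF assms(1-3)] by simp
  then show ?thesis using i by simp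
qed

lemma cw_cong: "take (q - 1) B = take (q - 1) B' \<Longrightarrow> cw C q B = cw C q B'"
  unfolding cw_def by simp

locale pcode =
  fixes q :: nat and C :: "nat list set"
  assumes pc: "perfect_code1 (Suc q) q C" and q2: "2 \<le> q"
begin

lemma q1: "1 \<le> q" using q2 by simp

lemma sfun_lt: "sfun C q B < q"
  unfolding sfun_def using q2 by simp

lemma psif_lt: "B \<in> ham_vertices q q \<Longrightarrow> psif C q B < q"
  unfolding psif_def using cw_vert[OF pc q1] by simp

lemma cwq_lt: "B \<in> ham_vertices q q \<Longrightarrow> i < Suc q \<Longrightarrow> cw C q B ! i < q"
  using cw_vert[OF pc q1] by simp

lemma cw_eq2:
  assumes B1: "B1 \<in> ham_vertices q q" and B2: "B2 \<in> ham_vertices q q"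
    and pre: "\<forall>i<q - 1. i \<noteq> i1 \<longrightarrow> i \<noteq> i2 \<longrightarrow> B1!i = B2!i"
    and a1: "q - 1 \<noteq> i1 \<Longrightarrow> q - 1 \<noteq> i2 \<Longrightarrow> cw C q B1 ! (q - 1) = cw C q B2 ! (q - 1)"
    and a2: "q \<noteq> i1 \<Longrightarrow> q \<noteq> i2 \<Longrightarrow> cw C q B1 ! q = cw C q B2 ! q"
  shows "cw C q B1 = cw C q B2"
proof (rule code_agree[OF pc cw_spec(1)[OF pc q1 B1] cw_spec(1)[OF pc q1 B2]])
  show "\<forall>i<Suc q. i \<noteq> i1 \<longrightarrow> i \<noteq> i2 \<longrightarrow> cw C q B1 ! i = cw C q B2 ! i"
  proof (intro allI impI)
    fix i assume i: "i < Suc q" "i \<noteq> i1" "i \<noteq> i2"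
    show "cw C q B1 ! i = cw C q B2 ! i"
    proof (cases "i < q - 1")
      case True
      then show ?thesis using cw_pre[OF pc q1 B1 True] cw_pre[OF pc q1 B2 True] pre i by simp
    next
      case False
      then have "i = q - 1 \<or> i = q" using i by linarith
      then show ?thesis using a1 a2 i by blast
    qed
  qed
qed

lemma upd_len: "B \<in> ham_vertices q q \<Longrightarrow> length B = q"
  by (simp add: ham_vertices_def)

lemma sfun_upd_last:
  assumes B: "B \<in> ham_vertices q q" and a: "a < q"
  shows "cw C q (B[q - 1 := a]) = cw C q B" "sfun C q (B[q - 1 := a]) = (a + cw C q B ! (q - 1)) mod q"
proof -
  show cweq: "cw C q (B[q - 1 := a]) = cw C q B" by (rule cw_cong) simp
  have "B[q - 1 := a] ! (q - 1) = a" using upd_len[OF B] q2 by simp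
  then show "sfun C q (B[q - 1 := a]) = (a + cw C q B ! (q - 1)) mod q"
    unfolding sfun_def cweq by simp
qed

lemma T1:
  assumes B: "B \<in> ham_vertices q q" and j: "j < q" and a: "a < q" "a \<noteq> B!j"
  shows "sfun C q (B[j:=a]) \<noteq> sfun C q B"
proof
  assume eq: "sfun C q (B[j:=a]) = sfun C q B"
  have B': "B[j:=a] \<in> ham_vertices q q" using upd_in_ham[OF B a(1)] .
  show False
  proof (cases "j = q - 1")
    case True
    have "(a + cw C q B ! (q - 1)) mod q = (B!(q - 1) + cw C q B ! (q - 1)) mod q"
      using eq sfun_upd_last[OF B a(1)] True by (simp add: sfun_def)
    moreover have "B!(q - 1) < q" using B q2 by (simp add: ham_vertices_def)
    ultimately have "a = B!(q - 1)" using mod_add_inj a(1) by blast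
    then show False using a True by simp
  next
    case False
    then have jl: "j < q - 1" using j by linarith
    have "B[j:=a] ! (q - 1) = B ! (q - 1)" using False by simp
    then have "(B!(q - 1) + cw C q (B[j:=a]) ! (q - 1)) mod q = (B!(q - 1) + cw C q B ! (q - 1)) mod q"
      using eq by (simp add: sfun_def)
    then have e1: "cw C q (B[j:=a]) ! (q - 1) = cw C q B ! (q - 1)"
      by (rule mod_add_inj2) (use cwq_lt[OF B'] cwq_lt[OF B] in auto)
    have "cw C q (B[j:=a]) = cw C q B"
      by (rule cw_eq2[OF B' B, of j q]) (use e1 in auto)
    then have "cw C q (B[j:=a]) ! j = cw C q B ! j" by simp
    then have "B[j:=a] ! j = B ! j" using cw_pre[OF pc q1 B' jl] cw_pre[OF pc q1 B jl] by simp
    then show False using a upd_len[OF B] j by simp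
  qed
qed


lemma T_inj:
  assumes B: "B \<in> ham_vertices q q" and j: "j < q" "j' < q" and a: "a < q" "a' < q"
    and na: "a \<noteq> B!j" "a' \<noteq> B!j'"
    and es: "sfun C q (B[j:=a]) = sfun C q (B[j':=a'])"
    and ep: "psif C q (B[j:=a]) = psif C q (B[j':=a'])"
  shows "j = j' \<and> a = a'"
proof -
  have B1: "B[j:=a] \<in> ham_vertices q q" using upd_in_ham[OF B a(1)] .
  have B2: "B[j':=a'] \<in> ham_vertices q q" using upd_in_ham[OF B a(2)] .
  have lB: "length B = q" using upd_len[OF B] .
  have eq_q: "cw C q (B[j:=a]) ! q = cw C q (B[j':=a']) ! q" using ep by (simp add: psif_def)
  have Blt: "B!(q - 1) < q" using B q2 by (simp add: ham_vertices_def)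
  consider "j = q - 1" "j' = q - 1" | "j < q - 1" "j' = q - 1" | "j = q - 1" "j' < q - 1"
    | "j < q - 1" "j' < q - 1" using j by linarith
  then show ?thesis
  proof cases
    case 1
    then have "(a + cw C q B ! (q - 1)) mod q = (a' + cw C q B ! (q - 1)) mod q"
      using es sfun_upd_last[OF B a(1)] sfun_upd_last[OF B a(2)] by simp
    then have "a = a'" using mod_add_inj a by blast
    then show ?thesis using 1 by simp
  next
    case 2
    have c2: "cw C q (B[j':=a']) = cw C q B" using sfun_upd_last(1)[OF B a(2)] 2 by simp
    have "cw C q (B[j:=a]) = cw C q B"
      by (rule cw_eq2[OF B1 B, of j "q - 1"]) (use eq_q c2 in auto)
    then have "B[j:=a] ! j = B ! j" using cw_pre[OF pc q1 B1 2(1)] cw_pre[OF pc q1 B 2(1)] by simp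
    then show ?thesis using na lB j by simp
  next
    case 3
    have c1: "cw C q (B[j:=a]) = cw C q B" using sfun_upd_last(1)[OF B a(1)] 3 by simp
    have "cw C q (B[j':=a']) = cw C q B"
      by (rule cw_eq2[OF B2 B, of j' "q - 1"]) (use eq_q c1 in auto)
    then have "B[j':=a'] ! j' = B ! j'" using cw_pre[OF pc q1 B2 3(2)] cw_pre[OF pc q1 B 3(2)] by simp
    then show ?thesis using na lB j by simp
  next
    case 4
    have "B[j:=a] ! (q - 1) = B!(q - 1)" "B[j':=a'] ! (q - 1) = B!(q - 1)" using 4 by auto
    then have "(B!(q - 1) + cw C q (B[j:=a]) ! (q - 1)) mod q = (B!(q - 1) + cw C q (B[j':=a']) ! (q - 1)) mod q"
      using es by (simp add: sfun_def)
    then have e1: "cw C q (B[j:=a]) ! (q - 1) = cw C q (B[j':=a']) ! (q - 1)"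
      by (rule mod_add_inj2) (use cwq_lt[OF B1] cwq_lt[OF B2] in auto)
    have "cw C q (B[j:=a]) = cw C q (B[j':=a'])"
      by (rule cw_eq2[OF B1 B2, of j j']) (use e1 eq_q in auto)
    then have "B[j:=a] ! j = B[j':=a'] ! j" using cw_pre[OF pc q1 B1 4(1)] cw_pre[OF pc q1 B2 4(1)] by simp
    then show ?thesis using na lB j by (cases "j = j'") auto
  qed
qed


definition phi :: "nat list \<Rightarrow> nat \<times> nat \<Rightarrow> nat \<times> nat" where
  "phi B = (\<lambda>(j,a). (sfun C q (B[j:=a]), psif C q (B[j:=a])))"

lemma T_bij:
  assumes B: "B \<in> ham_vertices q q"
  shows "bij_betw (phi B) (Sigma {..<q} (\<lambda>j. {a. a<q \<and> a \<noteq> B!j}))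
           (({..<q} - {sfun C q B}) \<times> {..<q})"
proof -
  let ?S = "Sigma {..<q} (\<lambda>j. {a. a<q \<and> a \<noteq> B!j})"
  let ?T = "({..<q} - {sfun C q B}) \<times> {..<q}"
  have inj: "inj_on (phi B) ?S"
  proof (rule inj_onI)
    fix u v assume u: "u \<in> ?S" and v: "v \<in> ?S" and e: "phi B u = phi B v"
    obtain j a where ja: "u = (j,a)" by (cases u)
    obtain j' a' where ja': "v = (j',a')" by (cases v)
    have h: "j < q" "j' < q" "a < q" "a' < q" "a \<noteq> B!j" "a' \<noteq> B!j'" using u v ja ja' by auto
    have "sfun C q (B[j:=a]) = sfun C q (B[j':=a'])" "psif C q (B[j:=a]) = psif C q (B[j':=a'])"
      using e ja ja' by (auto simp: phi_def)
    then have "j = j' \<and> a = a'" using T_inj[OF B h(1,2,3,4,5,6)] by blast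
    then show "u = v" using ja ja' by simp
  qed
  have sub: "phi B ` ?S \<subseteq> ?T"
  proof
    fix v assume "v \<in> phi B ` ?S"
    then obtain j a where ja: "j < q" "a < q" "a \<noteq> B!j" "v = phi B (j,a)" by auto
    have "sfun C q (B[j:=a]) \<noteq> sfun C q B" using T1[OF B ja(1,2,3)] .
    moreover have "psif C q (B[j:=a]) < q" using psif_lt upd_in_ham[OF B ja(2)] by blast
    ultimately show "v \<in> ?T" using ja sfun_lt by (simp add: phi_def)
  qed
  have cS: "card ?S = q * (q - 1)"
  proof -
    have "card ?S = (\<Sum>j<q. card {a. a<q \<and> a \<noteq> B!j})" by (rule card_SigmaI) auto
    also have "\<dots> = (\<Sum>j<q. q - 1)"
    proof (intro sum.cong refl)
      fix j assume "j \<in> {..<q}"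
      then have "B!j < q" using B by (simp add: ham_vertices_def)
      then show "card {a. a<q \<and> a \<noteq> B!j} = q - 1" by (rule card_neq)
    qed
    finally show ?thesis by simp
  qed
  have cT: "card ?T = q * (q - 1)"
    using sfun_lt[of B] by (simp add: card_cartesian_product)
  have "phi B ` ?S = ?T"
    by (rule card_subset_eq) (use sub card_image[OF inj] cS cT in auto)
  then show ?thesis using inj by (simp add: bij_betw_def)
qed

lemma block_count:
  assumes B: "B \<in> ham_vertices q q"
  shows "(\<Sum>j<q. card {a. a<q \<and> a \<noteq> B!j \<and> Psi (sfun C q (B[j:=a])) (psif C q (B[j:=a]))})
         = card {(w,r). w<q \<and> r<q \<and> w \<noteq> sfun C q B \<and> Psi w r}"
proof -
  let ?S = "Sigma {..<q} (\<lambda>j. {a. a<q \<and> a \<noteq> B!j})"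
  let ?T = "({..<q} - {sfun C q B}) \<times> {..<q}"
  let ?S' = "Sigma {..<q} (\<lambda>j. {a. a<q \<and> a \<noteq> B!j \<and> Psi (sfun C q (B[j:=a])) (psif C q (B[j:=a]))})"
  let ?T' = "{(w,r). w<q \<and> r<q \<and> w \<noteq> sfun C q B \<and> Psi w r}"
  have bij: "bij_betw (phi B) ?S ?T" by (rule T_bij[OF B])
  have sub: "?S' \<subseteq> ?S" by (rule Sigma_mono) auto
  have inj: "inj_on (phi B) ?S'" by (rule inj_on_subset[OF bij_betw_imp_inj_on[OF bij] sub])
  have su: "phi B ` ?S = ?T" using bij_betw_imp_surj_on[OF bij] .
  have img: "phi B ` ?S' = ?T'"
  proof
    show "phi B ` ?S' \<subseteq> ?T'"
    proof
      fix v assume "v \<in> phi B ` ?S'"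
      then obtain u where u: "u \<in> ?S'" "v = phi B u" by (rule imageE) 
      obtain j a where ja: "u = (j, a)" by (cases u)
      have uS: "u \<in> ?S" using subsetD[OF sub u(1)] .
      have "phi B u \<in> phi B ` ?S" using uS by (rule imageI)
      then have "phi B u \<in> ?T" using su by simp
      then have "v \<in> ?T" using u(2) by simp
      moreover have "Psi (sfun C q (B[j:=a])) (psif C q (B[j:=a]))" using u(1) ja by simp
      moreover have "v = (sfun C q (B[j:=a]), psif C q (B[j:=a]))" using u(2) ja by (simp add: phi_def)
      ultimately show "v \<in> ?T'" by auto
    qed
    show "?T' \<subseteq> phi B ` ?S'"
    proof
      fix v assume v: "v \<in> ?T'"
      obtain w r where wr: "v = (w, r)" by (cases v)
      have h: "w < q" "r < q" "w \<noteq> sfun C q B" "Psi w r" using v wr by auto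
      have "v \<in> ?T" using h wr by simp
      then have "v \<in> phi B ` ?S" using su by simp
      then obtain u where u: "u \<in> ?S" "v = phi B u" by (rule imageE)
      obtain j a where ja: "u = (j, a)" by (cases u)
      have e: "sfun C q (B[j:=a]) = w" "psif C q (B[j:=a]) = r" using u(2) ja wr by (auto simp: phi_def)
      have "u \<in> ?S'" using u(1) ja e h by auto
      then show "v \<in> phi B ` ?S'" using u(2) by (rule rev_image_eqI)
    qed
  qed
  have "(\<Sum>j<q. card {a. a<q \<and> a \<noteq> B!j \<and> Psi (sfun C q (B[j:=a])) (psif C q (B[j:=a]))}) = card ?S'"
    by (rule card_SigmaI[symmetric]) auto
  also have "\<dots> = card ?T'" using card_image[OF inj] img by (simp only:)
  finally show ?thesis .
qed

lemma tau_surj: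
  assumes w: "w < q" and r: "r < q"
  shows "\<exists>B\<in>ham_vertices q q. sfun C q B = w \<and> psif C q B = r"
proof -
  have B0: "replicate q 0 \<in> ham_vertices q q" using q2 by (simp add: ham_vertices_def)
  have "\<exists>B\<in>ham_vertices q q. sfun C q B \<noteq> w"
  proof (cases "sfun C q (replicate q 0) = w")
    case False then show ?thesis using B0 by blast
  next
    case True
    have l1: "(1::nat) < q" using q2 by simp
    have "(replicate q 0)[0 := 1] \<in> ham_vertices q q" using upd_in_ham[OF B0 l1] .
    moreover have "sfun C q ((replicate q 0)[0 := 1]) \<noteq> sfun C q (replicate q 0)"
    proof (rule T1[OF B0])
      show "0 < q" "1 < q" using q2 by auto
      show "(1::nat) \<noteq> replicate q 0 ! 0" using q2 by simp
    qed
    ultimately show ?thesis using True by blast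
  qed
  then obtain B where B: "B \<in> ham_vertices q q" "sfun C q B \<noteq> w" by blast
  have "(w, r) \<in> ({..<q} - {sfun C q B}) \<times> {..<q}" using w r B by simp
  then have "(w, r) \<in> phi B ` Sigma {..<q} (\<lambda>j. {a. a<q \<and> a \<noteq> B!j})"
    using bij_betw_imp_surj_on[OF T_bij[OF B(1)]] by simp
  then obtain u where u: "u \<in> Sigma {..<q} (\<lambda>j. {a. a<q \<and> a \<noteq> B!j})" "(w, r) = phi B u"
    by (rule imageE)
  obtain j a where ja: "u = (j, a)" by (cases u)
  have "a < q" using u(1) ja by simp
  then have "B[j:=a] \<in> ham_vertices q q" using upd_in_ham[OF B(1)] by blast
  moreover have "sfun C q (B[j:=a]) = w" "psif C q (B[j:=a]) = r" using u(2) ja by (simp_all add: phi_def)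
  ultimately show ?thesis by blast
qed

end

definition blk :: "nat \<Rightarrow> nat \<Rightarrow> nat list \<Rightarrow> nat list" where
  "blk q i x = map (\<lambda>j. x!(i*q+j)) [0..<q]"

definition zp :: "nat \<Rightarrow> nat \<Rightarrow> nat \<Rightarrow> nat list \<Rightarrow> nat list" where
  "zp q n d x = map (\<lambda>j. x!(q*n+j)) [0..<d]"

lemma sum_split_add: "(\<Sum>p<m+d. F p) = (\<Sum>p<m. F p) + (\<Sum>j<d. F (m + j :: nat))"
  by (induction d) (simp_all add: add.assoc)

lemma sum_blocks: "(\<Sum>p<n*q. F p) = (\<Sum>i<n. \<Sum>j<q. F (i*q + j :: nat))"
proof (induction n)
  case 0 then show ?case by simp
next
  case (Suc n)
  have "(\<Sum>p<Suc n * q. F p) = (\<Sum>p<n*q + q. F p)" by (simp add: add.commute)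
  also have "\<dots> = (\<Sum>p<n*q. F p) + (\<Sum>j<q. F (n*q + j))" by (rule sum_split_add)
  finally show ?case using Suc by simp
qed

lemma divq: "j < q \<Longrightarrow> (i*q+j) div (q::nat) = i"
  by simp

lemma idx_lt: "l < n \<Longrightarrow> j < q \<Longrightarrow> l*q + j < n*(q::nat)"
proof -
  assume "l < n" "j < q"
  then have "l*q + j < l*q + q" by simp
  also have "\<dots> = Suc l * q" by simp
  also have "\<dots> \<le> n*q" using \<open>l < n\<close> by (intro mult_le_mono1) simp
  finally show ?thesis .
qed

lemma blk_len: "length (blk q i x) = q" by (simp add: blk_def)

lemma blk_nth: "j < q \<Longrightarrow> blk q i x ! j = x!(i*q+j)" by (simp add: blk_def)

lemma blk_upd_same:
  assumes "j < q" "i*q+j < length x"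
  shows "blk q i (x[i*q+j := a]) = (blk q i x)[j := a]"
proof (rule nth_equalityI)
  show "length (blk q i (x[i*q+j := a])) = length ((blk q i x)[j := a])" by (simp add: blk_len)
  fix j' assume "j' < length (blk q i (x[i*q+j := a]))"
  then have j': "j' < q" by (simp add: blk_len)
  show "blk q i (x[i*q+j := a]) ! j' = (blk q i x)[j := a] ! j'"
    using j' assms by (cases "j' = j") (simp_all add: blk_nth blk_len)
qed

lemma blk_upd_other:
  assumes "j < q" "l \<noteq> i"
  shows "blk q l (x[i*q+j := a]) = blk q l x"
proof (rule nth_equalityI)
  show "length (blk q l (x[i*q+j := a])) = length (blk q l x)" by (simp add: blk_len)
  fix j' assume "j' < length (blk q l (x[i*q+j := a]))"
  then have j': "j' < q" by (simp add: blk_len)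
  have "l*q+j' \<noteq> i*q+j"
  proof
    assume "l*q+j' = i*q+j"
    then have "(l*q+j') div q = (i*q+j) div q" by simp
    then show False using divq[OF j'] divq[OF assms(1)] assms(2) by simp
  qed
  then show "blk q l (x[i*q+j := a]) ! j' = blk q l x ! j'" using j' by (simp add: blk_nth)
qed

lemma blk_upd_far:
  assumes "l < n" "n*q \<le> p"
  shows "blk q l (x[p := a]) = blk q l x"
proof (rule nth_equalityI)
  show "length (blk q l (x[p := a])) = length (blk q l x)" by (simp add: blk_len)
  fix j' assume "j' < length (blk q l (x[p := a]))"
  then have j': "j' < q" by (simp add: blk_len)
  have "l*q+j' < n*q" using idx_lt[OF assms(1) j'] .
  then have "l*q+j' \<noteq> p" using assms(2) by simp
  then show "blk q l (x[p := a]) ! j' = blk q l x ! j'" using j' by (simp add: blk_nth)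
qed

lemma blk_vert:
  assumes "x \<in> ham_vertices N q" "i < n" "n*q \<le> N"
  shows "blk q i x \<in> ham_vertices q q"
  unfolding ham_vertices_def
proof (intro CollectI conjI allI impI)
  show "length (blk q i x) = q" by (rule blk_len)
  fix j assume j: "j < q"
  have "i*q+j < N" using idx_lt[OF assms(2) j] assms(3) by simp
  then show "blk q i x ! j < q" using assms(1) j by (simp add: blk_nth ham_vertices_def)
qed

lemma zp_len: "length (zp q n d x) = d" by (simp add: zp_def)

lemma zp_upd_blk:
  assumes "i < n" "j < q"
  shows "zp q n d (x[i*q+j := a]) = zp q n d x"
proof -
  have "i*q+j < n*q" using idx_lt[OF assms] .
  then have "\<forall>j'. i*q+j \<noteq> q*n + j'" by (simp add: mult.commute)
  then show ?thesis by (simp add: zp_def)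
qed

lemma zp_upd_z:
  assumes "j < d" "q*n+j < length x"
  shows "zp q n d (x[q*n+j := a]) = (zp q n d x)[j := a]"
proof (rule nth_equalityI)
  show "length (zp q n d (x[q*n+j := a])) = length ((zp q n d x)[j := a])" by (simp add: zp_len)
  fix j' assume "j' < length (zp q n d (x[q*n+j := a]))"
  then have j': "j' < d" by (simp add: zp_len)
  then show "zp q n d (x[q*n+j := a]) ! j' = (zp q n d x)[j := a] ! j'"
    using assms by (cases "j' = j") (simp_all add: zp_def)
qed

context pcode
begin

definition sig :: "nat \<Rightarrow> nat list \<Rightarrow> nat list" where
  "sig n x = map (\<lambda>i. sfun C q (blk q i x)) [0..<n]"

definition rho :: "nat \<Rightarrow> nat list \<Rightarrow> nat list" where
  "rho n x = map (\<lambda>i. psif C q (blk q i x)) [0..<n]"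

lemma sig_upd_blk:
  assumes "i < n" "j < q" "i*q+j < length x"
  shows "sig n (x[i*q+j := a]) = (sig n x)[i := sfun C q ((blk q i x)[j := a])]"
proof (rule nth_equalityI)
  show "length (sig n (x[i*q+j := a])) = length ((sig n x)[i := sfun C q ((blk q i x)[j := a])])"
    by (simp add: sig_def)
  fix l assume "l < length (sig n (x[i*q+j := a]))"
  then have l: "l < n" by (simp add: sig_def)
  show "sig n (x[i*q+j := a]) ! l = (sig n x)[i := sfun C q ((blk q i x)[j := a])] ! l"
  proof (cases "l = i")
    case True then show ?thesis using l assms blk_upd_same[OF assms(2,3)] by (simp add: sig_def)
  next
    case False then show ?thesis using l assms blk_upd_other[OF assms(2) False] by (simp add: sig_def)
  qed
qed

lemma rho_upd_blk:
  assumes "i < n" "j < q" "i*q+j < length x"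
  shows "rho n (x[i*q+j := a]) = (rho n x)[i := psif C q ((blk q i x)[j := a])]"
proof (rule nth_equalityI)
  show "length (rho n (x[i*q+j := a])) = length ((rho n x)[i := psif C q ((blk q i x)[j := a])])"
    by (simp add: rho_def)
  fix l assume "l < length (rho n (x[i*q+j := a]))"
  then have l: "l < n" by (simp add: rho_def)
  show "rho n (x[i*q+j := a]) ! l = (rho n x)[i := psif C q ((blk q i x)[j := a])] ! l"
  proof (cases "l = i")
    case True then show ?thesis using l assms blk_upd_same[OF assms(2,3)] by (simp add: rho_def)
  next
    case False then show ?thesis using l assms blk_upd_other[OF assms(2) False] by (simp add: rho_def)
  qed
qed

lemma sig_upd_far: "n*q \<le> p \<Longrightarrow> sig n (x[p := a]) = sig n x"
  unfolding sig_def by (auto simp: blk_upd_far)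

lemma rho_upd_far: "n*q \<le> p \<Longrightarrow> rho n (x[p := a]) = rho n x"
  unfolding rho_def by (auto simp: blk_upd_far)


lemma sig_nth: "i < n \<Longrightarrow> sig n x ! i = sfun C q (blk q i x)" by (simp add: sig_def)
lemma rho_nth: "i < n \<Longrightarrow> rho n x ! i = psif C q (blk q i x)" by (simp add: rho_def)
lemma sig_len: "length (sig n x) = n" by (simp add: sig_def)
lemma rho_len: "length (rho n x) = n" by (simp add: rho_def)

lemma lift_count:
  assumes x: "x \<in> ham_vertices (q*n+d) q"
  shows "card {y \<in> ham_nbrs (q*n+d) q x. Phi (sig n y) (rho n y) (zp q n d y)} =
   (\<Sum>i<n. card {(w,r). w<q \<and> r<q \<and> w \<noteq> sig n x ! i \<and> Phi ((sig n x)[i:=w]) ((rho n x)[i:=r]) (zp q n d x)})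
   + (\<Sum>j<d. card {z. z<q \<and> z \<noteq> zp q n d x ! j \<and> Phi (sig n x) (rho n x) ((zp q n d x)[j:=z])})"
proof -
  define F where "F p = card {a. a<q \<and> a \<noteq> x!p \<and> Phi (sig n (x[p:=a])) (rho n (x[p:=a])) (zp q n d (x[p:=a]))}" for p
  have lx: "length x = q*n+d" using x by (simp add: ham_vertices_def)
  have "card {y \<in> ham_nbrs (q*n+d) q x. Phi (sig n y) (rho n y) (zp q n d y)} = (\<Sum>p<q*n+d. F p)"
    unfolding F_def by (rule card_nbrs_pred[OF x])
  also have "\<dots> = (\<Sum>p<q*n. F p) + (\<Sum>j<d. F (q*n+j))" by (rule sum_split_add)
  also have "(\<Sum>p<q*n. F p) = (\<Sum>i<n. \<Sum>j<q. F (i*q+j))"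
    using sum_blocks[of F n q] by (simp add: mult.commute)
  also have "(\<Sum>i<n. \<Sum>j<q. F (i*q+j)) =
     (\<Sum>i<n. card {(w,r). w<q \<and> r<q \<and> w \<noteq> sig n x ! i \<and> Phi ((sig n x)[i:=w]) ((rho n x)[i:=r]) (zp q n d x)})"
  proof (intro sum.cong refl)
    fix i assume "i \<in> {..<n}"
    then have i: "i < n" by simp
    have Bv: "blk q i x \<in> ham_vertices q q" using blk_vert[OF x i] by (simp add: mult.commute)
    define Psi where "Psi w r = Phi ((sig n x)[i:=w]) ((rho n x)[i:=r]) (zp q n d x)" for w r
    have "F (i*q+j) = card {a. a<q \<and> a \<noteq> blk q i x ! j \<and> Psi (sfun C q ((blk q i x)[j:=a])) (psif C q ((blk q i x)[j:=a]))}"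
      if j: "j < q" for j
    proof -
      have il: "i*q+j < length x" using idx_lt[OF i j] lx by (simp add: mult.commute)
      have "\<And>a. sig n (x[i*q+j:=a]) = (sig n x)[i := sfun C q ((blk q i x)[j := a])]"
        using sig_upd_blk[OF i j il] .
      moreover have "\<And>a. rho n (x[i*q+j:=a]) = (rho n x)[i := psif C q ((blk q i x)[j := a])]"
        using rho_upd_blk[OF i j il] .
      moreover have "\<And>a. zp q n d (x[i*q+j:=a]) = zp q n d x" using zp_upd_blk[OF i j] .
      moreover have "blk q i x ! j = x!(i*q+j)" using blk_nth[OF j] .
      ultimately show ?thesis unfolding F_def Psi_def by simp
    qed
    then have "(\<Sum>j<q. F (i*q+j)) = (\<Sum>j<q. card {a. a<q \<and> a \<noteq> blk q i x ! j \<and> Psi (sfun C q ((blk q i x)[j:=a])) (psif C q ((blk q i x)[j:=a]))})"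
      by (intro sum.cong refl) simp
    also have "\<dots> = card {(w,r). w<q \<and> r<q \<and> w \<noteq> sfun C q (blk q i x) \<and> Psi w r}"
      by (rule block_count[OF Bv])
    also have "\<dots> = card {(w,r). w<q \<and> r<q \<and> w \<noteq> sig n x ! i \<and> Phi ((sig n x)[i:=w]) ((rho n x)[i:=r]) (zp q n d x)}"
      using sig_nth[OF i] by (simp add: Psi_def)
    finally show "(\<Sum>j<q. F (i*q+j)) = card {(w,r). w<q \<and> r<q \<and> w \<noteq> sig n x ! i \<and> Phi ((sig n x)[i:=w]) ((rho n x)[i:=r]) (zp q n d x)}" .
  qed
  also have "(\<Sum>j<d. F (q*n+j)) = (\<Sum>j<d. card {z. z<q \<and> z \<noteq> zp q n d x ! j \<and> Phi (sig n x) (rho n x) ((zp q n d x)[j:=z])})"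
  proof (intro sum.cong refl)
    fix j assume "j \<in> {..<d}"
    then have j: "j < d" by simp
    have far: "n*q \<le> q*n+j" by (simp add: mult.commute)
    have jl: "q*n+j < length x" using lx j by simp
    have "\<And>a. sig n (x[q*n+j:=a]) = sig n x" using sig_upd_far[OF far] .
    moreover have "\<And>a. rho n (x[q*n+j:=a]) = rho n x" using rho_upd_far[OF far] .
    moreover have "\<And>a. zp q n d (x[q*n+j:=a]) = (zp q n d x)[j := a]" using zp_upd_z[OF j jl] .
    moreover have "zp q n d x ! j = x!(q*n+j)" using j by (simp add: zp_def)
    ultimately show "F (q*n+j) = card {z. z<q \<and> z \<noteq> zp q n d x ! j \<and> Phi (sig n x) (rho n x) ((zp q n d x)[j:=z])}"
      unfolding F_def by simp
  qed
  finally show ?thesis .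
qed

end

definition Fof :: "nat list set set \<Rightarrow> nat list \<Rightarrow> nat list set" where
  "Fof P v = (THE F. F \<in> P \<and> v \<in> F)"

definition Kof :: "nat \<Rightarrow> nat \<Rightarrow> nat \<Rightarrow> nat list set \<Rightarrow> nat set" where
  "Kof n q k F = (SOME K. \<exists>x. K \<subseteq> {..<n} \<and> card K = k \<and> x \<in> ham_vertices n q \<and>
      F = {y \<in> ham_vertices n q. \<forall>i<n. i \<notin> K \<longrightarrow> y ! i = x ! i})"

definition hval :: "nat \<Rightarrow> nat \<Rightarrow> nat set \<Rightarrow> bool \<Rightarrow> nat list \<Rightarrow> nat list \<Rightarrow> nat list \<Rightarrow> nat" where
  "hval n q K e v \<rho> Z = ((\<Sum>l\<in>{..<n}-K. \<rho>!l) + (if e then (\<Sum>l\<in>K. v!l) else 0) + (\<Sum>l<length Z. Z!l)) mod q"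

definition Gc :: "nat \<Rightarrow> nat \<Rightarrow> nat \<Rightarrow> bool \<Rightarrow> nat \<Rightarrow> (nat list \<Rightarrow> nat) \<Rightarrow> nat list set set
   \<Rightarrow> nat list \<Rightarrow> nat list \<Rightarrow> nat list \<Rightarrow> nat" where
  "Gc n q k e t f P v \<rho> Z = (if v \<in> ham_vertices n q \<and> f v = 1
      then (if hval n q (Kof n q k (Fof P v)) e v \<rho> Z < t then 1 else 2) else 2)"

lemma sum_upd_in:
  fixes xs :: "nat list"
  assumes "finite A" "j \<in> A" "j < length xs"
  shows "(\<Sum>l\<in>A. xs[j:=z] ! l) = (\<Sum>l\<in>A-{j}. xs!l) + z"
proof -
  have "(\<Sum>l\<in>A. xs[j:=z] ! l) = xs[j:=z] ! j + (\<Sum>l\<in>A-{j}. xs[j:=z] ! l)"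
    using sum.remove[OF assms(1,2)] .
  also have "(\<Sum>l\<in>A-{j}. xs[j:=z] ! l) = (\<Sum>l\<in>A-{j}. xs ! l)" by (intro sum.cong) auto
  finally show ?thesis using assms(3) by (simp add: add.commute)
qed

lemma sum_upd_out:
  fixes xs :: "nat list"
  assumes "j \<notin> A"
  shows "(\<Sum>l\<in>A. xs[j:=z] ! l) = (\<Sum>l\<in>A. xs!l)"
proof (intro sum.cong refl)
  fix l assume "l \<in> A"
  then have "j \<noteq> l" using assms by blast
  then show "xs[j:=z] ! l = xs ! l" by simp
qed

locale facepart =
  fixes n q k b c :: nat and f :: "nat list \<Rightarrow> nat" and P :: "nat list set set"
  assumes col: "is_coloring n q b c f"
    and Pf: "\<forall>F\<in>P. is_face n q k F"
    and Pd: "\<forall>F\<in>P. \<forall>G\<in>P. F \<noteq> G \<longrightarrow> F \<inter> G = {}"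
    and PU: "\<Union>P = {x \<in> ham_vertices n q. f x = 1}"
begin

abbreviation "S \<equiv> {x \<in> ham_vertices n q. f x = 1}"

lemma f12: "v \<in> ham_vertices n q \<Longrightarrow> f v = 1 \<or> f v = 2"
  using col unfolding is_coloring_def by blast

lemma Fof_spec:
  assumes "v \<in> S"
  shows "Fof P v \<in> P" "v \<in> Fof P v"
proof -
  obtain F where F: "F \<in> P" "v \<in> F" using assms PU by blast
  have "Fof P v = F" unfolding Fof_def
  proof (rule the_equality)
    show "F \<in> P \<and> v \<in> F" using F by simp
    fix G assume "G \<in> P \<and> v \<in> G"
    then show "G = F" using Pd F by blast
  qed
  then show "Fof P v \<in> P" "v \<in> Fof P v" using F by auto
qed

lemma Fof_uniq:
  assumes "F \<in> P" "v \<in> F"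
  shows "Fof P v = F"
proof -
  have vS: "v \<in> S" using assms PU by blast
  show ?thesis
  proof (rule ccontr)
    assume "Fof P v \<noteq> F"
    then have "Fof P v \<inter> F = {}" using Pd Fof_spec(1)[OF vS] assms(1) by blast
    then show False using Fof_spec(2)[OF vS] assms(2) by blast
  qed
qed

lemma Kof_spec:
  assumes "F \<in> P"
  shows "Kof n q k F \<subseteq> {..<n}" "card (Kof n q k F) = k"
    "\<exists>x. x \<in> ham_vertices n q \<and> F = {y \<in> ham_vertices n q. \<forall>i<n. i \<notin> Kof n q k F \<longrightarrow> y ! i = x ! i}"
proof -
  have "\<exists>K x. K \<subseteq> {..<n} \<and> card K = k \<and> x \<in> ham_vertices n q \<and>
      F = {y \<in> ham_vertices n q. \<forall>i<n. i \<notin> K \<longrightarrow> y ! i = x ! i}"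
    using Pf assms by (simp add: is_face_def)
  then have "\<exists>x. Kof n q k F \<subseteq> {..<n} \<and> card (Kof n q k F) = k \<and> x \<in> ham_vertices n q \<and>
      F = {y \<in> ham_vertices n q. \<forall>i<n. i \<notin> Kof n q k F \<longrightarrow> y ! i = x ! i}"
    unfolding Kof_def by (rule someI_ex)
  then show "Kof n q k F \<subseteq> {..<n}" "card (Kof n q k F) = k"
    "\<exists>x. x \<in> ham_vertices n q \<and> F = {y \<in> ham_vertices n q. \<forall>i<n. i \<notin> Kof n q k F \<longrightarrow> y ! i = x ! i}"
    by blast+
qed

lemma face_upd:
  assumes F: "F \<in> P" and v: "v \<in> F" and i: "i \<in> Kof n q k F" and w: "w < q"
  shows "v[i:=w] \<in> F"
proof -
  obtain x0 where x0: "F = {y \<in> ham_vertices n q. \<forall>i<n. i \<notin> Kof n q k F \<longrightarrow> y ! i = x0 ! i}"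
    using Kof_spec(3)[OF F] by blast
  have vv: "v \<in> ham_vertices n q" "\<forall>l<n. l \<notin> Kof n q k F \<longrightarrow> v ! l = x0 ! l" using v x0 by auto
  have "v[i:=w] \<in> ham_vertices n q" using upd_in_ham[OF vv(1) w] .
  moreover have "\<forall>l<n. l \<notin> Kof n q k F \<longrightarrow> v[i:=w] ! l = x0 ! l"
  proof (intro allI impI)
    fix l assume "l < n" "l \<notin> Kof n q k F"
    then have "l \<noteq> i" using i by blast
    then show "v[i:=w] ! l = x0 ! l" using vv(2) \<open>l < n\<close> \<open>l \<notin> Kof n q k F\<close> by simp
  qed
  ultimately show ?thesis using x0 by blast
qed

lemma S_sub: "v \<in> S \<Longrightarrow> v \<in> ham_vertices n q" by simp

lemma K_other:
  assumes v: "v \<in> ham_vertices n q" and v': "v[i:=w] \<in> S" and i: "i \<in> Kof n q k (Fof P (v[i:=w]))"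
  shows "v \<in> S" "Fof P v = Fof P (v[i:=w])"
proof -
  let ?F = "Fof P (v[i:=w])"
  have F: "?F \<in> P" "v[i:=w] \<in> ?F" using Fof_spec[OF v'] by auto
  have vi: "v!i < q" and iv: "i < length v"
    using v Kof_spec(1)[OF F(1)] i by (auto simp: ham_vertices_def)
  have "(v[i:=w])[i := v!i] = v" using iv by simp
  then have vF: "v \<in> ?F" using face_upd[OF F(1) F(2) i vi] by simp
  then show "v \<in> S" using F(1) PU by blast
  show "Fof P v = ?F" using Fof_uniq[OF F(1) vF] .
qed


lemma Gc_S: "v \<in> S \<Longrightarrow> Gc n q k e t f P v \<rho> Z = (if hval n q (Kof n q k (Fof P v)) e v \<rho> Z < t then 1 else 2)"
  by (simp add: Gc_def)

lemma Gc_nS: "v \<notin> S \<Longrightarrow> Gc n q k e t f P v \<rho> Z = 2"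
  by (auto simp: Gc_def)

lemma Gc_1: "Gc n q k e t f P v \<rho> Z = 1 \<longleftrightarrow> v \<in> S \<and> hval n q (Kof n q k (Fof P v)) e v \<rho> Z < t"
  by (auto simp: Gc_def)

lemma hval_rho_upd:
  assumes "i < n" "i \<notin> K" "length \<rho> = n"
  shows "hval n q K e v (\<rho>[i:=r]) Z =
     ((\<Sum>l\<in>{..<n}-K-{i}. \<rho>!l) + (if e then (\<Sum>l\<in>K. v!l) else 0) + (\<Sum>l<length Z. Z!l) + r) mod q"
proof -
  have "(\<Sum>l\<in>{..<n}-K. \<rho>[i:=r]!l) = (\<Sum>l\<in>{..<n}-K-{i}. \<rho>!l) + r"
    by (rule sum_upd_in) (use assms in auto)
  then show ?thesis unfolding hval_def by (simp add: algebra_simps)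
qed

lemma blockA:
  assumes v: "v \<in> ham_vertices n q" and rl: "length \<rho> = n" and i: "i < n"
    and H: "\<forall>w<q. v[i:=w] \<in> S \<longrightarrow> i \<notin> Kof n q k (Fof P (v[i:=w]))"
    and q0: "0 < q" and t: "t \<le> q"
  shows "card {(w,r). w<q \<and> r<q \<and> w \<noteq> v!i \<and> Gc n q k e t f P (v[i:=w]) (\<rho>[i:=r]) Z = 1}
         = t * card {w. w<q \<and> w \<noteq> v!i \<and> v[i:=w] \<in> S}"
proof -
  let ?W = "{w. w<q \<and> w \<noteq> v!i \<and> v[i:=w] \<in> S}"
  define K where "K w = Kof n q k (Fof P (v[i:=w]))" for w
  define X where "X w = (\<Sum>l\<in>{..<n}-K w-{i}. \<rho>!l) + (if e then (\<Sum>l\<in>K w. v[i:=w]!l) else 0) + (\<Sum>l<length Z. Z!l)" for w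
  have hv: "hval n q (K w) e (v[i:=w]) (\<rho>[i:=r]) Z = (X w + r) mod q" if "w \<in> ?W" for w r
  proof -
    have "i \<notin> K w" using H that unfolding K_def by blast
    then show ?thesis unfolding X_def using hval_rho_upd[OF i _ rl] by simp
  qed
  have eq: "{(w,r). w<q \<and> r<q \<and> w \<noteq> v!i \<and> Gc n q k e t f P (v[i:=w]) (\<rho>[i:=r]) Z = 1}
      = Sigma ?W (\<lambda>w. {r. r<q \<and> (X w + r) mod q < t})"
  proof (rule set_eqI)
    fix u :: "nat \<times> nat"
    obtain w r where u: "u = (w, r)" by (cases u)
    show "u \<in> {(w,r). w<q \<and> r<q \<and> w \<noteq> v!i \<and> Gc n q k e t f P (v[i:=w]) (\<rho>[i:=r]) Z = 1}
      \<longleftrightarrow> u \<in> Sigma ?W (\<lambda>w. {r. r<q \<and> (X w + r) mod q < t})"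
    proof (cases "w \<in> ?W")
      case True
      then show ?thesis using u hv[OF True, of r] Gc_1 unfolding K_def by auto
    next
      case False
      then show ?thesis using u Gc_1 by auto
    qed
  qed
  have "card (Sigma ?W (\<lambda>w. {r. r<q \<and> (X w + r) mod q < t})) = (\<Sum>w\<in>?W. card {r. r<q \<and> (X w + r) mod q < t})"
    by (rule card_SigmaI) auto
  also have "\<dots> = (\<Sum>w\<in>?W. t)" using count_lt[OF q0 t] by simp
  finally show ?thesis using eq by simp
qed

lemma blockK_e:
  assumes vS: "v \<in> S" and rl: "length \<rho> = n" and i: "i \<in> Kof n q k (Fof P v)"
    and q0: "0 < q" and t: "t \<le> q"
  shows "card {(w,r). w<q \<and> r<q \<and> w \<noteq> v!i \<and> Gc n q k True t f P (v[i:=w]) (\<rho>[i:=r]) Z = 1}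
         + q * (if hval n q (Kof n q k (Fof P v)) True v \<rho> Z < t then 1 else 0) = q * t"
proof -
  let ?F = "Fof P v"
  let ?K = "Kof n q k ?F"
  have F: "?F \<in> P" "v \<in> ?F" using Fof_spec[OF vS] by auto
  have Ksub: "?K \<subseteq> {..<n}" using Kof_spec(1)[OF F(1)] .
  have finK: "finite ?K" using finite_subset[OF Ksub] by simp
  have vv: "v \<in> ham_vertices n q" using vS by simp
  have iv: "i < length v" using vv Ksub i by (auto simp: ham_vertices_def)
  define Y where "Y = (\<Sum>l\<in>{..<n}-?K. \<rho>!l) + (\<Sum>l\<in>?K-{i}. v!l) + (\<Sum>l<length Z. Z!l)"
  have vi: "v!i < q" using vv iv by (simp add: ham_vertices_def)
  have h0: "hval n q ?K True v \<rho> Z = (Y + v!i) mod q"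
  proof -
    have "(\<Sum>l\<in>?K. v!l) = v!i + (\<Sum>l\<in>?K-{i}. v!l)" using sum.remove[OF finK i] .
    then show ?thesis unfolding hval_def Y_def by (simp add: algebra_simps)
  qed
  have hw: "Gc n q k True t f P (v[i:=w]) (\<rho>[i:=r]) Z = 1 \<longleftrightarrow> (Y + w) mod q < t" if w: "w < q" for w r
  proof -
    have vF: "v[i:=w] \<in> ?F" using face_upd[OF F i w] .
    then have vS': "v[i:=w] \<in> S" using F(1) PU by blast
    have FF: "Fof P (v[i:=w]) = ?F" using Fof_uniq[OF F(1) vF] .
    have s1: "(\<Sum>l\<in>{..<n}-?K. \<rho>[i:=r]!l) = (\<Sum>l\<in>{..<n}-?K. \<rho>!l)"
      by (rule sum_upd_out) (use i in blast)
    have s2: "(\<Sum>l\<in>?K. v[i:=w]!l) = (\<Sum>l\<in>?K-{i}. v!l) + w"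
      by (rule sum_upd_in[OF finK i iv])
    have "hval n q ?K True (v[i:=w]) (\<rho>[i:=r]) Z = (Y + w) mod q"
      unfolding hval_def Y_def using s1 s2 by (simp add: algebra_simps)
    then show ?thesis using Gc_1 vS' FF by simp
  qed
  have eq: "{(w,r). w<q \<and> r<q \<and> w \<noteq> v!i \<and> Gc n q k True t f P (v[i:=w]) (\<rho>[i:=r]) Z = 1}
      = {w. w<q \<and> w \<noteq> v!i \<and> (Y + w) mod q < t} \<times> {..<q}"
  proof (rule set_eqI)
    fix u :: "nat \<times> nat"
    obtain w r where u: "u = (w, r)" by (cases u)
    show "u \<in> {(w,r). w<q \<and> r<q \<and> w \<noteq> v!i \<and> Gc n q k True t f P (v[i:=w]) (\<rho>[i:=r]) Z = 1}
      \<longleftrightarrow> u \<in> {w. w<q \<and> w \<noteq> v!i \<and> (Y + w) mod q < t} \<times> {..<q}"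
      using u hw by auto
  qed
  have c1: "card {w. w<q \<and> w \<noteq> v!i \<and> (Y + w) mod q < t} + (if (Y + v!i) mod q < t then 1 else 0) = t"
    by (rule count_lt_ne[OF q0 t vi])
  have cE: "card {(w,r). w<q \<and> r<q \<and> w \<noteq> v!i \<and> Gc n q k True t f P (v[i:=w]) (\<rho>[i:=r]) Z = 1}
     = q * card {w. w<q \<and> w \<noteq> v!i \<and> (Y + w) mod q < t}"
    unfolding eq by (simp add: card_cartesian_product mult.commute)
  have "q * card {w. w<q \<and> w \<noteq> v!i \<and> (Y + w) mod q < t} + q * (if (Y + v!i) mod q < t then 1 else 0) = q * t"
    using c1 by (metis add_mult_distrib2)
  then show ?thesis unfolding cE h0 .
qed

lemma blockK_ne:
  assumes vS: "v \<in> S" and rl: "length \<rho> = n" and i: "i \<in> Kof n q k (Fof P v)"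
  shows "card {(w,r). w<q \<and> r<q \<and> w \<noteq> v!i \<and> Gc n q k False t f P (v[i:=w]) (\<rho>[i:=r]) Z = 1}
         = (if hval n q (Kof n q k (Fof P v)) False v \<rho> Z < t then q * (q - 1) else 0)"
proof -
  let ?F = "Fof P v"
  let ?K = "Kof n q k ?F"
  have F: "?F \<in> P" "v \<in> ?F" using Fof_spec[OF vS] by auto
  have vv: "v \<in> ham_vertices n q" using vS by simp
  have vi: "v!i < q" using vv Kof_spec(1)[OF F(1)] i by (auto simp: ham_vertices_def)
  have hw: "Gc n q k False t f P (v[i:=w]) (\<rho>[i:=r]) Z = 1 \<longleftrightarrow> hval n q ?K False v \<rho> Z < t"
    if w: "w < q" for w r
  proof -
    have vF: "v[i:=w] \<in> ?F" using face_upd[OF F i w] .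
    then have vS': "v[i:=w] \<in> S" using F(1) PU by blast
    have FF: "Fof P (v[i:=w]) = ?F" using Fof_uniq[OF F(1) vF] .
    have s1: "(\<Sum>l\<in>{..<n}-?K. \<rho>[i:=r]!l) = (\<Sum>l\<in>{..<n}-?K. \<rho>!l)"
      by (rule sum_upd_out) (use i in blast)
    have "hval n q ?K False (v[i:=w]) (\<rho>[i:=r]) Z = hval n q ?K False v \<rho> Z"
      unfolding hval_def using s1 by simp
    then show ?thesis using Gc_1 vS' FF by simp
  qed
  show ?thesis
  proof (cases "hval n q ?K False v \<rho> Z < t")
    case True
    have E: "{(w,r). w<q \<and> r<q \<and> w \<noteq> v!i \<and> Gc n q k False t f P (v[i:=w]) (\<rho>[i:=r]) Z = 1}
      = {w. w<q \<and> w \<noteq> v!i} \<times> {..<q}"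
      using hw True by auto
    show ?thesis unfolding E using True card_neq[OF vi] by (simp add: card_cartesian_product)
  next
    case False
    have E: "{(w,r). w<q \<and> r<q \<and> w \<noteq> v!i \<and> Gc n q k False t f P (v[i:=w]) (\<rho>[i:=r]) Z = 1} = {}"
      using hw False by auto
    show ?thesis unfolding E using False by simp
  qed
qed

lemma Zblock:
  assumes vS: "v \<in> S" and j: "j < length Z" and Zj: "Z!j < q" and q0: "0 < q" and t: "t \<le> q"
  shows "card {z. z<q \<and> z \<noteq> Z!j \<and> Gc n q k e t f P v \<rho> (Z[j:=z]) = 1}
         + (if hval n q (Kof n q k (Fof P v)) e v \<rho> Z < t then 1 else 0) = t"
proof -
  let ?K = "Kof n q k (Fof P v)"
  define W where "W = (\<Sum>l\<in>{..<n}-?K. \<rho>!l) + (if e then (\<Sum>l\<in>?K. v!l) else 0) + (\<Sum>l\<in>{..<length Z}-{j}. Z!l)"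
  have jin: "j \<in> {..<length Z}" using j by simp
  have h0: "hval n q ?K e v \<rho> Z = (W + Z!j) mod q"
  proof -
    have "(\<Sum>l<length Z. Z!l) = Z!j + (\<Sum>l\<in>{..<length Z}-{j}. Z!l)" using sum.remove[OF _ jin] by simp
    then show ?thesis unfolding hval_def W_def by (simp add: algebra_simps)
  qed
  have hz: "hval n q ?K e v \<rho> (Z[j:=z]) = (W + z) mod q" for z
  proof -
    have "(\<Sum>l<length (Z[j:=z]). Z[j:=z]!l) = (\<Sum>l\<in>{..<length Z}-{j}. Z!l) + z"
      using sum_upd_in[of "{..<length Z}" j Z z] jin j by simp
    then show ?thesis unfolding hval_def W_def by (simp add: algebra_simps)
  qed
  have "{z. z<q \<and> z \<noteq> Z!j \<and> Gc n q k e t f P v \<rho> (Z[j:=z]) = 1} = {z. z<q \<and> z \<noteq> Z!j \<and> (W + z) mod q < t}"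
    using Gc_1 vS hz by auto
  then show ?thesis using count_lt_ne[OF q0 t Zj, of W] h0 by simp
qed

lemma Zblock_nS:
  assumes "v \<notin> S"
  shows "card {z. z<q \<and> z \<noteq> Z!j \<and> Gc n q k e t f P v \<rho> (Z[j:=z]) = 1} = 0"
  using assms Gc_nS by simp


definition cnt :: "nat list \<Rightarrow> nat \<Rightarrow> nat" where
  "cnt v i = card {w. w<q \<and> w \<noteq> v!i \<and> v[i:=w] \<in> S}"

lemma sum_cnt:
  assumes v: "v \<in> ham_vertices n q"
  shows "(\<Sum>i<n. cnt v i) = card {y \<in> ham_nbrs n q v. f y = 1}"
proof -
  have "card {y \<in> ham_nbrs n q v. f y = 1} = card {y \<in> ham_nbrs n q v. y \<in> S}"
    by (rule arg_cong[where f=card]) (auto simp: ham_nbrs_def)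
  also have "\<dots> = (\<Sum>p<n. card {a. a<q \<and> a \<noteq> v!p \<and> v[p:=a] \<in> S})"
    by (rule card_nbrs_pred[OF v])
  finally show ?thesis by (simp add: cnt_def)
qed

lemma nb_split:
  assumes v: "v \<in> ham_vertices n q"
  shows "card {y \<in> ham_nbrs n q v. f y = 1} + card {y \<in> ham_nbrs n q v. f y = 2} = n * (q - 1)"
proof -
  have fin: "finite (ham_nbrs n q v)"
  proof (rule finite_subset)
    show "ham_nbrs n q v \<subseteq> ham_vertices n q" by (auto simp: ham_nbrs_def)
    show "finite (ham_vertices n q)" using card_ham_vertices by blast
  qed
  have "ham_nbrs n q v = {y \<in> ham_nbrs n q v. f y = 1} \<union> {y \<in> ham_nbrs n q v. f y = 2}"
    using f12 by (auto simp: ham_nbrs_def)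
  moreover have "{y \<in> ham_nbrs n q v. f y = 1} \<inter> {y \<in> ham_nbrs n q v. f y = 2} = {}" by auto
  ultimately have "card (ham_nbrs n q v) = card {y \<in> ham_nbrs n q v. f y = 1} + card {y \<in> ham_nbrs n q v. f y = 2}"
    using fin by (metis (no_types, lifting) card_Un_disjoint finite_Un)
  then show ?thesis using card_nbrs[OF v] by simp
qed

lemma sum_cnt_S:
  assumes vS: "v \<in> S"
  shows "(\<Sum>i<n. cnt v i) + b = n * (q - 1)"
proof -
  have v: "v \<in> ham_vertices n q" using vS by simp
  have "card {y \<in> ham_nbrs n q v. f y = 2} = b" using col vS by (simp add: is_coloring_def)
  then show ?thesis using nb_split[OF v] sum_cnt[OF v] by simp
qed

lemma sum_cnt_nS:
  assumes v: "v \<in> ham_vertices n q" and nS: "v \<notin> S"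
  shows "(\<Sum>i<n. cnt v i) = c"
proof -
  have "f v = 2" using f12[OF v] nS v by auto
  then have "card {y \<in> ham_nbrs n q v. f y = 1} = c" using col v by (simp add: is_coloring_def)
  then show ?thesis using sum_cnt[OF v] by simp
qed

lemma cnt_K:
  assumes vS: "v \<in> S" and i: "i \<in> Kof n q k (Fof P v)"
  shows "cnt v i = q - 1"
proof -
  have F: "Fof P v \<in> P" "v \<in> Fof P v" using Fof_spec[OF vS] by auto
  have vv: "v \<in> ham_vertices n q" using vS by simp
  have vi: "v!i < q" using vv Kof_spec(1)[OF F(1)] i by (auto simp: ham_vertices_def)
  have "{w. w<q \<and> w \<noteq> v!i \<and> v[i:=w] \<in> S} = {w. w<q \<and> w \<noteq> v!i}"
  proof (rule set_eqI)
    fix w show "w \<in> {w. w<q \<and> w \<noteq> v!i \<and> v[i:=w] \<in> S} \<longleftrightarrow> w \<in> {w. w<q \<and> w \<noteq> v!i}"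
    proof
      assume "w \<in> {w. w<q \<and> w \<noteq> v!i}"
      then have w: "w < q" "w \<noteq> v!i" by auto
      have "v[i:=w] \<in> Fof P v" using face_upd[OF F i w(1)] .
      then have "v[i:=w] \<in> S" using F(1) PU by blast
      then show "w \<in> {w. w<q \<and> w \<noteq> v!i \<and> v[i:=w] \<in> S}" using w by simp
    qed simp
  qed
  then show ?thesis unfolding cnt_def using card_neq[OF vi] by simp
qed

definition Qcnt :: "bool \<Rightarrow> nat \<Rightarrow> nat list \<Rightarrow> nat list \<Rightarrow> nat list \<Rightarrow> nat" where
  "Qcnt e t v \<rho> Z = (\<Sum>i<n. card {(w,r). w<q \<and> r<q \<and> w \<noteq> v!i \<and> Gc n q k e t f P (v[i:=w]) (\<rho>[i:=r]) Z = 1})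
     + (\<Sum>j<length Z. card {z. z<q \<and> z \<noteq> Z!j \<and> Gc n q k e t f P v \<rho> (Z[j:=z]) = 1})"

lemma Qcnt_nS:
  assumes v: "v \<in> ham_vertices n q" and nS: "v \<notin> S" and rl: "length \<rho> = n"
    and q0: "0 < q" and t: "t \<le> q"
  shows "Qcnt e t v \<rho> Z = t * c"
proof -
  have "(\<Sum>i<n. card {(w,r). w<q \<and> r<q \<and> w \<noteq> v!i \<and> Gc n q k e t f P (v[i:=w]) (\<rho>[i:=r]) Z = 1})
      = (\<Sum>i<n. t * cnt v i)"
  proof (intro sum.cong refl)
    fix i assume "i \<in> {..<n}"
    then have i: "i < n" by simp
    have H: "\<forall>w<q. v[i:=w] \<in> S \<longrightarrow> i \<notin> Kof n q k (Fof P (v[i:=w]))"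
      using K_other(1)[OF v] nS by blast
    show "card {(w,r). w<q \<and> r<q \<and> w \<noteq> v!i \<and> Gc n q k e t f P (v[i:=w]) (\<rho>[i:=r]) Z = 1} = t * cnt v i"
      unfolding cnt_def by (rule blockA[OF v rl i H q0 t])
  qed
  also have "\<dots> = t * c" using sum_cnt_nS[OF v nS] by (simp add: sum_distrib_left[symmetric])
  finally show ?thesis unfolding Qcnt_def using Zblock_nS[OF nS] by simp
qed

lemma Qcnt_S_common:
  assumes vS: "v \<in> S" and rl: "length \<rho> = n" and q0: "0 < q" and t: "t \<le> q"
  shows "(\<Sum>i\<in>{..<n} - Kof n q k (Fof P v). card {(w,r). w<q \<and> r<q \<and> w \<noteq> v!i \<and> Gc n q k e t f P (v[i:=w]) (\<rho>[i:=r]) Z = 1})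
      + t * (k * (q - 1)) + t * b = t * (n * (q - 1))"
proof -
  let ?K = "Kof n q k (Fof P v)"
  have F: "Fof P v \<in> P" using Fof_spec[OF vS] by auto
  have Ksub: "?K \<subseteq> {..<n}" and cK: "card ?K = k" using Kof_spec[OF F] by auto
  have v: "v \<in> ham_vertices n q" using vS by simp
  have "(\<Sum>i\<in>{..<n} - ?K. card {(w,r). w<q \<and> r<q \<and> w \<noteq> v!i \<and> Gc n q k e t f P (v[i:=w]) (\<rho>[i:=r]) Z = 1})
      = (\<Sum>i\<in>{..<n} - ?K. t * cnt v i)"
  proof (intro sum.cong refl)
    fix i assume "i \<in> {..<n} - ?K"
    then have i: "i < n" "i \<notin> ?K" by auto
    have H: "\<forall>w<q. v[i:=w] \<in> S \<longrightarrow> i \<notin> Kof n q k (Fof P (v[i:=w]))"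
      using K_other(2)[OF v] i(2) by metis
    show "card {(w,r). w<q \<and> r<q \<and> w \<noteq> v!i \<and> Gc n q k e t f P (v[i:=w]) (\<rho>[i:=r]) Z = 1} = t * cnt v i"
      unfolding cnt_def by (rule blockA[OF v rl i(1) H q0 t])
  qed
  also have "\<dots> = t * (\<Sum>i\<in>{..<n} - ?K. cnt v i)" by (simp add: sum_distrib_left)
  finally have e1: "(\<Sum>i\<in>{..<n} - ?K. card {(w,r). w<q \<and> r<q \<and> w \<noteq> v!i \<and> Gc n q k e t f P (v[i:=w]) (\<rho>[i:=r]) Z = 1})
      = t * (\<Sum>i\<in>{..<n} - ?K. cnt v i)" .
  have "(\<Sum>i<n. cnt v i) = (\<Sum>i\<in>{..<n} - ?K. cnt v i) + (\<Sum>i\<in>?K. cnt v i)"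
    using sum.subset_diff[OF Ksub] by simp
  also have "(\<Sum>i\<in>?K. cnt v i) = (\<Sum>i\<in>?K. q - 1)" using cnt_K[OF vS] by simp
  also have "\<dots> = k * (q - 1)" using cK by simp
  finally have e2: "(\<Sum>i\<in>{..<n} - ?K. cnt v i) + k * (q - 1) + b = n * (q - 1)"
    using sum_cnt_S[OF vS] by simp
  show ?thesis unfolding e1 using e2 by (metis add_mult_distrib2)
qed


lemma Zsum:
  assumes vS: "v \<in> S" and Zq: "\<forall>j<length Z. Z!j < q" and q0: "0 < q" and t: "t \<le> q"
  shows "(\<Sum>j<length Z. card {z. z<q \<and> z \<noteq> Z!j \<and> Gc n q k e t f P v \<rho> (Z[j:=z]) = 1})
     + length Z * (if hval n q (Kof n q k (Fof P v)) e v \<rho> Z < t then 1 else 0) = length Z * t"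
proof -
  let ?in = "(if hval n q (Kof n q k (Fof P v)) e v \<rho> Z < t then 1 else 0)"
  have "(\<Sum>j<length Z. card {z. z<q \<and> z \<noteq> Z!j \<and> Gc n q k e t f P v \<rho> (Z[j:=z]) = 1} + ?in)
     = (\<Sum>j<length Z. t)"
  proof (intro sum.cong refl)
    fix j assume "j \<in> {..<length Z}"
    then have j: "j < length Z" by simp
    show "card {z. z<q \<and> z \<noteq> Z!j \<and> Gc n q k e t f P v \<rho> (Z[j:=z]) = 1} + ?in = t"
      by (rule Zblock[OF vS j _ q0 t]) (use Zq j in simp)
  qed
  then show ?thesis by (simp add: sum.distrib)
qed

lemma Qcnt_S_True:
  assumes vS: "v \<in> S" and rl: "length \<rho> = n" and Zq: "\<forall>j<length Z. Z!j < q"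
    and q0: "0 < q" and t: "t \<le> q"
  shows "Qcnt True t v \<rho> Z + (k*q + length Z) * (if hval n q (Kof n q k (Fof P v)) True v \<rho> Z < t then 1 else 0)
     + t * (k * (q - 1)) + t * b = k*q*t + t * (n * (q - 1)) + length Z * t"
proof -
  let ?K = "Kof n q k (Fof P v)"
  let ?in = "(if hval n q ?K True v \<rho> Z < t then 1 else 0)"
  let ?X = "\<lambda>i. card {(w,r). w<q \<and> r<q \<and> w \<noteq> v!i \<and> Gc n q k True t f P (v[i:=w]) (\<rho>[i:=r]) Z = 1}"
  have F: "Fof P v \<in> P" using Fof_spec[OF vS] by auto
  have Ksub: "?K \<subseteq> {..<n}" and cK: "card ?K = k" using Kof_spec[OF F] by auto
  have s1: "(\<Sum>i<n. ?X i) = (\<Sum>i\<in>{..<n} - ?K. ?X i) + (\<Sum>i\<in>?K. ?X i)"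
    using sum.subset_diff[OF Ksub] by simp
  have "(\<Sum>i\<in>?K. ?X i + q * ?in) = (\<Sum>i\<in>?K. q * t)"
    by (intro sum.cong refl blockK_e[OF vS rl _ q0 t])
  then have s2: "(\<Sum>i\<in>?K. ?X i) + k * (q * ?in) = k * (q * t)" using cK by (simp add: sum.distrib)
  have s3: "(\<Sum>i\<in>{..<n} - ?K. ?X i) + t * (k * (q - 1)) + t * b = t * (n * (q - 1))"
    by (rule Qcnt_S_common[OF vS rl q0 t])
  have s4: "(\<Sum>j<length Z. card {z. z<q \<and> z \<noteq> Z!j \<and> Gc n q k True t f P v \<rho> (Z[j:=z]) = 1})
     + length Z * ?in = length Z * t" by (rule Zsum[OF vS Zq q0 t])
  show ?thesis unfolding Qcnt_def s1 using s2 s3 s4 by (simp add: algebra_simps)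
qed

lemma Qcnt_S_False:
  assumes vS: "v \<in> S" and rl: "length \<rho> = n" and Zq: "\<forall>j<length Z. Z!j < q"
    and q0: "0 < q" and t: "t \<le> q"
  shows "Qcnt False t v \<rho> Z + length Z * (if hval n q (Kof n q k (Fof P v)) False v \<rho> Z < t then 1 else 0)
     + t * (k * (q - 1)) + t * b
     = k * (q * (q - 1)) * (if hval n q (Kof n q k (Fof P v)) False v \<rho> Z < t then 1 else 0)
       + t * (n * (q - 1)) + length Z * t"
proof -
  let ?K = "Kof n q k (Fof P v)"
  let ?in = "(if hval n q ?K False v \<rho> Z < t then 1 else 0)"
  let ?X = "\<lambda>i. card {(w,r). w<q \<and> r<q \<and> w \<noteq> v!i \<and> Gc n q k False t f P (v[i:=w]) (\<rho>[i:=r]) Z = 1}"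
  have F: "Fof P v \<in> P" using Fof_spec[OF vS] by auto
  have Ksub: "?K \<subseteq> {..<n}" and cK: "card ?K = k" using Kof_spec[OF F] by auto
  have s1: "(\<Sum>i<n. ?X i) = (\<Sum>i\<in>{..<n} - ?K. ?X i) + (\<Sum>i\<in>?K. ?X i)"
    using sum.subset_diff[OF Ksub] by simp
  have "(\<Sum>i\<in>?K. ?X i) = (\<Sum>i\<in>?K. q * (q - 1) * ?in)"
  proof (intro sum.cong refl)
    fix i assume "i \<in> ?K"
    then show "?X i = q * (q - 1) * ?in" using blockK_ne[OF vS rl, of i t Z] by simp
  qed
  then have s2: "(\<Sum>i\<in>?K. ?X i) = k * (q * (q - 1)) * ?in" using cK by simp
  have s3: "(\<Sum>i\<in>{..<n} - ?K. ?X i) + t * (k * (q - 1)) + t * b = t * (n * (q - 1))"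
    by (rule Qcnt_S_common[OF vS rl q0 t])
  have s4: "(\<Sum>j<length Z. card {z. z<q \<and> z \<noteq> Z!j \<and> Gc n q k False t f P v \<rho> (Z[j:=z]) = 1})
     + length Z * ?in = length Z * t" by (rule Zsum[OF vS Zq q0 t])
  show ?thesis unfolding Qcnt_def s1 s2 using s3 s4 by linarith
qed

end

lemma arA1:
  fixes Q t k b n d c m c2 :: nat
  assumes h1: "Q + (k*Suc m + d) + t*(k*m) + t*b = k*Suc m*t + t*(n*m) + d*t"
    and h2: "d + n*m + k = b + c" and h3: "c2 + Q = (Suc m*n + d)*m"
  shows "c2 = Suc m*(b+c) - t*c"
proof -
  have x1: "t*(d + n*m + k) = t*(b + c)" using h2 by simp
  have x2: "m*(d + n*m + k) = m*(b + c)" using h2 by simp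
  have a: "Q + k*m + k + d + t*k*m + t*b = k*m*t + k*t + t*n*m + d*t" using h1 by (simp add: algebra_simps)
  have b: "t*d + t*n*m + t*k = t*b + t*c" using x1 by (simp add: algebra_simps)
  have c: "m*d + m*n*m + m*k = m*b + m*c" using x2 by (simp add: algebra_simps)
  have e: "c2 + Q = m*n*m + n*m + d*m" using h3 by (simp add: algebra_simps)
  have "c2 + t*c = Suc m*(b+c)" using a b c e h2 by (simp add: algebra_simps)
  then show ?thesis by simp
qed

lemma arA3:
  fixes Q t k b n d c m c2 :: nat
  assumes h1: "Q + d + t*(k*m) + t*b = k*(Suc m*m) + t*(n*m) + d*t"
    and h2: "d + n*m = k*m + b + c" and h3: "c2 + Q = (Suc m*n + d)*m"
  shows "c2 = Suc m*(b+c) - t*c"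
proof -
  have x1: "t*(d + n*m) = t*(k*m + b + c)" using h2 by simp
  have x2: "m*(d + n*m) = m*(k*m + b + c)" using h2 by simp
  have a: "Q + d + t*k*m + t*b = k*m*m + k*m + t*n*m + d*t" using h1 by (simp add: algebra_simps)
  have b: "t*d + t*n*m = t*k*m + t*b + t*c" using x1 by (simp add: algebra_simps)
  have c: "m*d + m*n*m = m*k*m + m*b + m*c" using x2 by (simp add: algebra_simps)
  have e: "c2 + Q = m*n*m + n*m + d*m" using h3 by (simp add: algebra_simps)
  have "c2 + t*c = Suc m*(b+c)" using a b c e h2 by (simp add: algebra_simps)
  then show ?thesis by simp
qed

lemma arA4:
  fixes Q t k b n d c m :: nat
  assumes h1: "Q + t*(k*m) + t*b = t*(n*m) + d*t" and h2: "d + n*m = k*m + b + c"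
  shows "Q = t*c"
proof -
  have x1: "t*(d + n*m) = t*(k*m + b + c)" using h2 by simp
  have a: "Q + t*k*m + t*b = t*n*m + d*t" using h1 by (simp add: algebra_simps)
  have b: "t*d + t*n*m = t*k*m + t*b + t*c" using x1 by (simp add: algebra_simps)
  show ?thesis using a b by (simp add: algebra_simps)
qed


lemma arB1:
  fixes Q t k b n d c q c2 :: nat
  assumes q: "1 \<le> q" and h1: "Q + (k*q + d) * 1 + t*(k*(q-1)) + t*b = k*q*t + t*(n*(q-1)) + d*t"
    and h2: "d + n*(q-1) + k = b + c" and h3: "Q + c2 = (q*n + d)*(q-1)"
  shows "c2 = q*(b+c) - t*c"
proof -
  obtain m where qm: "q = Suc m" using q by (cases q) auto
  have "Q + (k*Suc m + d) + t*(k*m) + t*b = k*Suc m*t + t*(n*m) + d*t" using h1 qm by simp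
  moreover have "d + n*m + k = b + c" using h2 qm by simp
  moreover have "c2 + Q = (Suc m*n + d)*m" using h3 qm by simp
  ultimately show ?thesis using arA1 qm by blast
qed

lemma arB2:
  fixes Q t k b n d c q :: nat
  assumes q: "1 \<le> q" and h1: "Q + (k*q + d) * 0 + t*(k*(q-1)) + t*b = k*q*t + t*(n*(q-1)) + d*t"
    and h2: "d + n*(q-1) + k = b + c"
  shows "Q = t*c"
proof -
  obtain m where qm: "q = Suc m" using q by (cases q) auto
  have h1': "Q + t*(k*m) + t*b = k*(Suc m)*t + t*(n*m) + d*t" using h1 qm by simp
  have h2': "d + n*m + k = b + c" using h2 qm by simp
  have h3: "t*(d + n*m + k) = t*(b + c)" using h2' by simp
  have a: "Q + t*k*m + t*b = k*m*t + k*t + t*n*m + d*t" using h1' by (simp add: algebra_simps)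
  have b: "t*d + t*n*m + t*k = t*b + t*c" using h3 by (simp add: algebra_simps)
  show ?thesis using a b by (simp add: algebra_simps)
qed

lemma arB3:
  fixes Q t k b n d c q c2 :: nat
  assumes q: "1 \<le> q" and h1: "Q + d * 1 + t*(k*(q-1)) + t*b = k*(q*(q-1))*1 + t*(n*(q-1)) + d*t"
    and h2: "d + n*(q-1) = k*(q-1) + b + c" and h3: "Q + c2 = (q*n + d)*(q-1)"
  shows "c2 = q*(b+c) - t*c"
proof -
  obtain m where qm: "q = Suc m" using q by (cases q) auto
  have "Q + d + t*(k*m) + t*b = k*(Suc m*m) + t*(n*m) + d*t" using h1 qm by simp
  moreover have "d + n*m = k*m + b + c" using h2 qm by simp
  moreover have "c2 + Q = (Suc m*n + d)*m" using h3 qm by simp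
  ultimately show ?thesis using arA3 qm by blast
qed

lemma arB4:
  fixes Q t k b n d c q :: nat
  assumes q: "1 \<le> q" and h1: "Q + d * 0 + t*(k*(q-1)) + t*b = k*(q*(q-1))*0 + t*(n*(q-1)) + d*t"
    and h2: "d + n*(q-1) = k*(q-1) + b + c"
  shows "Q = t*c"
proof -
  obtain m where qm: "q = Suc m" using q by (cases q) auto
  have "Q + t*(k*m) + t*b = t*(n*m) + d*t" using h1 qm by simp
  moreover have "d + n*m = k*m + b + c" using h2 qm by simp
  ultimately show ?thesis using arA4 by blast
qed

locale both = pcode q C + facepart n q k b c f P for n q k b c f P C
begin

definition gfun :: "bool \<Rightarrow> nat \<Rightarrow> nat \<Rightarrow> nat list \<Rightarrow> nat" where
  "gfun e t d x = Gc n q k e t f P (sig n x) (rho n x) (zp q n d x)"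

lemma sig_vert: "sig n x \<in> ham_vertices n q"
  unfolding ham_vertices_def using sfun_lt by (simp add: sig_def)

lemma rho_props:
  assumes x: "x \<in> ham_vertices (q*n+d) q"
  shows "length (rho n x) = n" "\<forall>i<n. rho n x ! i < q"
proof -
  show "length (rho n x) = n" by (rule rho_len)
  show "\<forall>i<n. rho n x ! i < q"
  proof (intro allI impI)
    fix i assume i: "i < n"
    have "blk q i x \<in> ham_vertices q q" using blk_vert[OF x i] by (simp add: mult.commute)
    then show "rho n x ! i < q" using psif_lt i by (simp add: rho_def)
  qed
qed

lemma zp_props:
  assumes x: "x \<in> ham_vertices (q*n+d) q"
  shows "length (zp q n d x) = d" "\<forall>j<d. zp q n d x ! j < q"
  using x by (auto simp: zp_def ham_vertices_def)

lemma g12: "gfun e t d x = 1 \<or> gfun e t d x = 2"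
  by (simp add: gfun_def Gc_def)

lemma g_count1:
  assumes x: "x \<in> ham_vertices (q*n+d) q"
  shows "card {y \<in> ham_nbrs (q*n+d) q x. gfun e t d y = 1} = Qcnt e t (sig n x) (rho n x) (zp q n d x)"
  unfolding gfun_def Qcnt_def zp_len using lift_count[OF x, where Phi="\<lambda>v \<rho> Z. Gc n q k e t f P v \<rho> Z = 1"]
  by simp

lemma g_split:
  assumes x: "x \<in> ham_vertices (q*n+d) q"
  shows "card {y \<in> ham_nbrs (q*n+d) q x. gfun e t d y = 1} + card {y \<in> ham_nbrs (q*n+d) q x. gfun e t d y = 2}
     = (q*n+d) * (q - 1)"
proof -
  let ?N = "ham_nbrs (q*n+d) q x"
  have fin: "finite ?N"
  proof (rule finite_subset)
    show "?N \<subseteq> ham_vertices (q*n+d) q" by (auto simp: ham_nbrs_def)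
    show "finite (ham_vertices (q*n+d) q)" using card_ham_vertices by blast
  qed
  have "?N = {y \<in> ?N. gfun e t d y = 1} \<union> {y \<in> ?N. gfun e t d y = 2}" using g12 by blast
  moreover have "{y \<in> ?N. gfun e t d y = 1} \<inter> {y \<in> ?N. gfun e t d y = 2} = {}" by auto
  ultimately have "card ?N = card {y \<in> ?N. gfun e t d y = 1} + card {y \<in> ?N. gfun e t d y = 2}"
    using fin by (metis (no_types, lifting) card_Un_disjoint finite_Un)
  then show ?thesis using card_nbrs[OF x] by simp
qed

lemma realize:
  assumes v: "v \<in> ham_vertices n q" and rl: "length \<rho> = n" and rq: "\<forall>i<n. \<rho>!i < q"
    and Z: "Z \<in> ham_vertices d q"
  shows "\<exists>x\<in>ham_vertices (q*n+d) q. sig n x = v \<and> rho n x = \<rho> \<and> zp q n d x = Z"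
proof -
  define Bs where "Bs i = (SOME B. B \<in> ham_vertices q q \<and> sfun C q B = v!i \<and> psif C q B = \<rho>!i)" for i
  have Bs: "Bs i \<in> ham_vertices q q \<and> sfun C q (Bs i) = v!i \<and> psif C q (Bs i) = \<rho>!i" if i: "i < n" for i
  proof -
    have "v!i < q" using v i by (simp add: ham_vertices_def)
    then have "\<exists>B. B \<in> ham_vertices q q \<and> sfun C q B = v!i \<and> psif C q B = \<rho>!i"
      using tau_surj rq i by blast
    then show ?thesis unfolding Bs_def by (rule someI_ex)
  qed
  define x where "x = map (\<lambda>p. if p < q*n then Bs (p div q) ! (p mod q) else Z!(p - q*n)) [0..<q*n+d]"
  have lx: "length x = q*n+d" by (simp add: x_def)
  have q0: "0 < q" using q2 by simp
  have blk: "blk q i x = Bs i" if i: "i < n" for i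
  proof (rule nth_equalityI)
    show "length (blk q i x) = length (Bs i)" using Bs[OF i] by (simp add: blk_len ham_vertices_def)
    fix j assume "j < length (blk q i x)"
    then have j: "j < q" by (simp add: blk_len)
    have lt: "i*q+j < q*n" using idx_lt[OF i j] by (simp add: mult.commute)
    have "(i*q+j) div q = i" "(i*q+j) mod q = j" using j by auto
    then show "blk q i x ! j = Bs i ! j" using lt j by (simp add: blk_nth x_def)
  qed
  have xv: "x \<in> ham_vertices (q*n+d) q"
    unfolding ham_vertices_def
  proof (intro CollectI conjI allI impI)
    show "length x = q*n+d" by (rule lx)
    fix p assume p: "p < q*n+d"
    show "x!p < q"
    proof (cases "p < q*n")
      case True
      have pd: "p div q < n" using True by (simp add: less_mult_imp_div_less mult.commute)
      have pm: "p mod q < q" using q0 by simp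
      have "Bs (p div q) ! (p mod q) < q" using Bs[OF pd] pm by (simp add: ham_vertices_def)
      then show ?thesis using True p by (simp add: x_def)
    next
      case False
      then have "p - q*n < d" using p by simp
      then have "Z!(p - q*n) < q" using Z by (simp add: ham_vertices_def)
      then show ?thesis using False p by (simp add: x_def)
    qed
  qed
  have "sig n x = v"
  proof (rule nth_equalityI)
    show "length (sig n x) = length v" using v by (simp add: sig_len ham_vertices_def)
    fix i assume "i < length (sig n x)"
    then have i: "i < n" by (simp add: sig_len)
    show "sig n x ! i = v ! i" using Bs[OF i] blk[OF i] sig_nth[OF i] by simp
  qed
  moreover have "rho n x = \<rho>"
  proof (rule nth_equalityI)
    show "length (rho n x) = length \<rho>" using rl by (simp add: rho_len)
    fix i assume "i < length (rho n x)"
    then have i: "i < n" by (simp add: rho_len)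
    show "rho n x ! i = \<rho> ! i" using Bs[OF i] blk[OF i] rho_nth[OF i] by simp
  qed
  moreover have "zp q n d x = Z"
  proof (rule nth_equalityI)
    show "length (zp q n d x) = length Z" using Z by (simp add: zp_len ham_vertices_def)
    fix j assume "j < length (zp q n d x)"
    then have j: "j < d" by (simp add: zp_len)
    show "zp q n d x ! j = Z ! j" using j by (simp add: zp_def x_def)
  qed
  ultimately show ?thesis using xv by blast
qed


lemma exists_free:
  assumes v0: "v0 \<in> ham_vertices n q" "f v0 = 2" and F: "F \<in> P"
  shows "\<exists>l0. l0 < n \<and> l0 \<notin> Kof n q k F"
proof (rule ccontr)
  assume "\<not> (\<exists>l0. l0 < n \<and> l0 \<notin> Kof n q k F)"
  then have all: "\<forall>l<n. l \<in> Kof n q k F" by blast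
  obtain x0 where x0: "F = {y \<in> ham_vertices n q. \<forall>i<n. i \<notin> Kof n q k F \<longrightarrow> y ! i = x0 ! i}"
    using Kof_spec(3)[OF F] by blast
  have mem: "v0 \<in> {y \<in> ham_vertices n q. \<forall>i<n. i \<notin> Kof n q k F \<longrightarrow> y ! i = x0 ! i}"
    using v0(1) all by simp
  have "v0 \<in> F" by (subst x0) (rule mem)
  then have "v0 \<in> S" using F PU by blast
  then show False using v0(2) by simp
qed

lemma main_col:
  assumes t: "1 \<le> t" "t \<le> q"
    and dd: "if e then d + n*(q-1) + k = b + c else d + n*(q-1) = k*(q-1) + b + c"
  shows "is_coloring (q*n+d) q (q*(b+c) - t*c) (t*c) (gfun e t d)"
proof -
  let ?N = "q*n+d"
  have q0: "0 < q" using q2 by simp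
  have q1': "1 \<le> q" using q2 by simp
  have imgf: "f ` ham_vertices n q = {1, 2}" using col by (simp add: is_coloring_def)
  have "2 \<in> f ` ham_vertices n q" using imgf by simp
  then obtain v0 where v0': "v0 \<in> ham_vertices n q" "2 = f v0" by (rule imageE)
  then have v0: "v0 \<in> ham_vertices n q" "f v0 = 2" by simp_all
  have "1 \<in> f ` ham_vertices n q" using imgf by simp
  then obtain v1 where v1': "v1 \<in> ham_vertices n q" "1 = f v1" by (rule imageE)
  then have v1: "v1 \<in> ham_vertices n q" "f v1 = 1" by simp_all
  have v1S: "v1 \<in> S" using v1 by simp
  have v0S: "v0 \<notin> S" using v0 by simp
  have Z0: "replicate d 0 \<in> ham_vertices d q" using q0 by (simp add: ham_vertices_def)
  have R0l: "length (replicate n (0::nat)) = n" "\<forall>i<n. replicate n (0::nat) ! i < q" using q0 by auto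
  have img: "gfun e t d ` ham_vertices ?N q = {1, 2}"
  proof
    show "gfun e t d ` ham_vertices ?N q \<subseteq> {1, 2}" using g12 by blast
    obtain x0 where x0: "x0 \<in> ham_vertices ?N q" "sig n x0 = v0"
      using realize[OF v0(1) R0l Z0] by blast
    have g0: "gfun e t d x0 = 2" unfolding gfun_def x0(2) using Gc_nS[OF v0S] .
    let ?F = "Fof P v1"
    let ?K = "Kof n q k ?F"
    have F: "?F \<in> P" using Fof_spec[OF v1S] by simp
    obtain l0 where l0: "l0 < n" "l0 \<notin> ?K" using exists_free[OF v0 F] by blast
    define E where "E = (if e then (\<Sum>l\<in>?K. v1!l) else 0)"
    have "0 \<in> (\<lambda>r. (E + r) mod q) ` {..<q}" using rot_perm(1)[OF q0, of E] q0 by simp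
    then obtain r where r: "r < q" "(E + r) mod q = 0" by auto
    define \<rho> where "\<rho> = (replicate n (0::nat))[l0 := r]"
    have rl1: "length \<rho> = n" by (simp add: \<rho>_def)
    have rl2: "\<forall>i<n. \<rho>!i < q"
    proof (intro allI impI)
      fix i assume "i < n"
      then show "\<rho>!i < q" unfolding \<rho>_def using r q0 by (cases "i = l0") auto
    qed
    note rl = rl1 rl2
    obtain x1 where x1: "x1 \<in> ham_vertices ?N q" "sig n x1 = v1" "rho n x1 = \<rho>" "zp q n d x1 = replicate d 0"
      using realize[OF v1(1) rl Z0] by blast
    have s1: "(\<Sum>l\<in>{..<n}-?K. \<rho>!l) = r"
    proof -
      have "(\<Sum>l\<in>{..<n}-?K. \<rho>!l) = (\<Sum>l\<in>{..<n}-?K-{l0}. (replicate n (0::nat))!l) + r"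
        unfolding \<rho>_def by (rule sum_upd_in) (use l0 in auto)
      also have "(\<Sum>l\<in>{..<n}-?K-{l0}. (replicate n (0::nat))!l) = 0" by simp
      finally show ?thesis by simp
    qed
    have "hval n q ?K e v1 \<rho> (replicate d 0) = (E + r) mod q"
      unfolding hval_def E_def s1 by (simp add: add.commute)
    then have "hval n q ?K e v1 \<rho> (replicate d 0) < t" using r t by simp
    then have g1: "gfun e t d x1 = 1" unfolding gfun_def x1(2,3,4) using Gc_S[OF v1S] by simp
    have i1: "1 \<in> gfun e t d ` ham_vertices ?N q" by (rule rev_image_eqI[OF x1(1)]) (simp add: g1)
    have i2: "2 \<in> gfun e t d ` ham_vertices ?N q" by (rule rev_image_eqI[OF x0(1)]) (simp add: g0)
    show "{1, 2} \<subseteq> gfun e t d ` ham_vertices ?N q" using i1 i2 by simp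
  qed
  have cnt: "(gfun e t d x = 1 \<longrightarrow> card {y \<in> ham_nbrs ?N q x. gfun e t d y = 2} = q*(b+c) - t*c) \<and>
             (gfun e t d x = 2 \<longrightarrow> card {y \<in> ham_nbrs ?N q x. gfun e t d y = 1} = t*c)"
    if x: "x \<in> ham_vertices ?N q" for x
  proof -
    let ?v = "sig n x" and ?r = "rho n x" and ?Z = "zp q n d x"
    let ?Q = "Qcnt e t ?v ?r ?Z"
    have c1: "card {y \<in> ham_nbrs ?N q x. gfun e t d y = 1} = ?Q" by (rule g_count1[OF x])
    have sp0: "card {y \<in> ham_nbrs ?N q x. gfun e t d y = 1} + card {y \<in> ham_nbrs ?N q x. gfun e t d y = 2} = ?N * (q - 1)"
      by (rule g_split[OF x])
    have sp: "?Q + card {y \<in> ham_nbrs ?N q x. gfun e t d y = 2} = ?N * (q - 1)"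
      using sp0 unfolding c1 .
    have rl: "length ?r = n" using rho_props[OF x] by simp
    have Zq: "\<forall>j<length ?Z. ?Z!j < q" and lZ: "length ?Z = d" using zp_props[OF x] by auto
    have vV: "?v \<in> ham_vertices n q" by (rule sig_vert)
    have gx: "gfun e t d x = Gc n q k e t f P ?v ?r ?Z" by (simp add: gfun_def)
    show ?thesis
    proof (cases "?v \<in> S")
      case False
      have "gfun e t d x = 2" using gx Gc_nS[OF False] by simp
      moreover have "?Q = t*c" using Qcnt_nS[OF vV False rl q0 t(2)] .
      ultimately show ?thesis using c1 by simp
    next
      case True
      let ?h = "hval n q (Kof n q k (Fof P ?v)) e ?v ?r ?Z"
      show ?thesis
      proof (cases "?h < t")
        case hT: True
        have g1: "gfun e t d x = 1" using gx Gc_S[OF True] hT by simp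
        have "card {y \<in> ham_nbrs ?N q x. gfun e t d y = 2} = q*(b+c) - t*c"
        proof (cases e)
          case eT: True
          have h1: "?Q + (k*q + d) * 1 + t*(k*(q-1)) + t*b = k*q*t + t*(n*(q-1)) + d*t"
            using Qcnt_S_True[OF True rl Zq q0 t(2)] hT eT lZ by simp
          have h2: "d + n*(q-1) + k = b + c" using dd eT by simp
          show ?thesis by (rule arB1[OF q1' h1 h2 sp])
        next
          case eF: False
          have h1: "?Q + d * 1 + t*(k*(q-1)) + t*b = k*(q*(q-1))*1 + t*(n*(q-1)) + d*t"
            using Qcnt_S_False[OF True rl Zq q0 t(2)] hT eF lZ by simp
          have h2: "d + n*(q-1) = k*(q-1) + b + c" using dd eF by simp
          show ?thesis by (rule arB3[OF q1' h1 h2 sp])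
        qed
        then show ?thesis using g1 by simp
      next
        case hF: False
        have g2: "gfun e t d x = 2" using gx Gc_S[OF True] hF by simp
        have "?Q = t*c"
        proof (cases e)
          case eT: True
          have h1: "?Q + (k*q + d) * 0 + t*(k*(q-1)) + t*b = k*q*t + t*(n*(q-1)) + d*t"
            using Qcnt_S_True[OF True rl Zq q0 t(2)] hF eT lZ by simp
          have h2: "d + n*(q-1) + k = b + c" using dd eT by simp
          show ?thesis by (rule arB2[OF q1' h1 h2])
        next
          case eF: False
          have h1: "?Q + d * 0 + t*(k*(q-1)) + t*b = k*(q*(q-1))*0 + t*(n*(q-1)) + d*t"
            using Qcnt_S_False[OF True rl Zq q0 t(2)] hF eF lZ by simp
          have h2: "d + n*(q-1) = k*(q-1) + b + c" using dd eF by simp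
          show ?thesis by (rule arB4[OF q1' h1 h2])
        qed
        then show ?thesis using g2 c1 by simp
      qed
    qed
  qed
  show ?thesis unfolding is_coloring_def
  proof (intro conjI ballI impI)
    show "gfun e t d ` ham_vertices ?N q = {1, 2}" by (rule img)
  next
    fix x assume "x \<in> ham_vertices ?N q" "gfun e t d x = 1"
    then show "card {y \<in> ham_nbrs ?N q x. gfun e t d y = 2} = q*(b+c) - t*c" using cnt by blast
  next
    fix x assume "x \<in> ham_vertices ?N q" "gfun e t d x = 2"
    then show "card {y \<in> ham_nbrs ?N q x. gfun e t d y = 1} = t*c" using cnt by blast
  qed
qed

end

lemma q_ge2:
  assumes col: "is_coloring n q b c f"
  shows "2 \<le> q"
proof (rule ccontr)
  assume "\<not> 2 \<le> q"
  then have q1: "q \<le> 1" by simp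
  have img: "f ` ham_vertices n q = {1, 2}" using col by (simp add: is_coloring_def)
  have fin: "finite (ham_vertices n q)" and cV: "card (ham_vertices n q) = q ^ n"
    using card_ham_vertices by auto
  have "q = 0 \<or> q = 1" using q1 by linarith
  then have "q ^ n \<le> 1" by (elim disjE) (simp_all add: power_0_left)
  then have "card (f ` ham_vertices n q) \<le> 1" using card_image_le[OF fin, of f] cV by simp
  then show False using img by simp
qed

theorem theorem7:
  fixes n q b c k :: nat and f :: "nat list \<Rightarrow> nat"
  assumes code: "\<exists>C. perfect_code1 (q + 1) q C"
    and col: "is_coloring n q b c f"
    and faces: "face_partitionable n q k {x \<in> ham_vertices n q. f x = 1}"
  shows "(main_eigenvalue n q b c + int k \<le> 0 \<longrightarrow>
            (\<forall>t\<in>{1..q}. \<exists>g. is_coloring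
               (nat (int q * int n - main_eigenvalue n q b c - int k)) q (q * (b + c) - t * c) (t * c) g
             \<and> main_eigenvalue (nat (int q * int n - main_eigenvalue n q b c - int k)) q
                  (q * (b + c) - t * c) (t * c)
                = main_eigenvalue n q b c - int k * (int q - 1)))
       \<and> (main_eigenvalue n q b c \<le> int k * (int q - 1) \<longrightarrow>
            (\<forall>t\<in>{1..q}. \<exists>g. is_coloring
               (nat (int q * int n - main_eigenvalue n q b c + int k * (int q - 1))) q (q * (b + c) - t * c) (t * c) g
             \<and> main_eigenvalue (nat (int q * int n - main_eigenvalue n q b c + int k * (int q - 1))) q
                  (q * (b + c) - t * c) (t * c)
                = main_eigenvalue n q b c + int k * (int q - 1)^2))"
proof -
  obtain C where pc0: "perfect_code1 (q + 1) q C" using code by blast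
  have pc: "perfect_code1 (Suc q) q C" using pc0 by simp
  have "\<exists>P. (\<forall>F\<in>P. is_face n q k F) \<and> (\<forall>F\<in>P. \<forall>G\<in>P. F \<noteq> G \<longrightarrow> F \<inter> G = {}) \<and>
      \<Union>P = {x \<in> ham_vertices n q. f x = 1}"
    using faces by (simp only: face_partitionable_def)
  then obtain P where P0: "(\<forall>F\<in>P. is_face n q k F) \<and> (\<forall>F\<in>P. \<forall>G\<in>P. F \<noteq> G \<longrightarrow> F \<inter> G = {}) \<and>
      \<Union>P = {x \<in> ham_vertices n q. f x = 1}" by (rule exE)
  note P = conjunct1[OF P0] conjunct1[OF conjunct2[OF P0]] conjunct2[OF conjunct2[OF P0]]
  have q2: "2 \<le> q" by (rule q_ge2[OF col])
  have loc: "both n q k b c f P C"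
    unfolding both_def pcode_def facepart_def using pc q2 col P(1) P(2) P(3) by blast
  interpret both n q k b c f P C by (rule loc)
  have iq: "int (q - 1) = int q - 1" using q2 by simp
  define lam where "lam = main_eigenvalue n q b c"
  have lam': "lam = int n * (int q - 1) - (int b + int c)" by (simp add: lam_def main_eigenvalue_def)
  have ev: "main_eigenvalue N q (q * (b + c) - t * c) (t * c) = int N * (int q - 1) - int q * (int b + int c)"
    if t: "t \<le> q" for N t
  proof -
    have "t * c \<le> q * (b + c)" using t by (simp add: mult_le_mono)
    then have "int (q * (b + c) - t * c) + int (t * c) = int q * (int b + int c)" by (simp add: of_nat_diff)
    then show ?thesis by (simp add: main_eigenvalue_def)
  qed
  show ?thesis unfolding lam_def[symmetric]
  proof (intro conjI impI ballI)
    fix t assume c1: "lam + int k \<le> 0" and t: "t \<in> {1..q}"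
    have t1: "1 \<le> t" "t \<le> q" using t by auto
    define d where "d = b + c - n * (q - 1) - k"
    have le: "n * (q - 1) + k \<le> b + c"
    proof -
      have "int (n * (q - 1)) + int k \<le> int b + int c" using c1 lam' iq by simp
      then show ?thesis by linarith
    qed
    have dd: "d + n * (q - 1) + k = b + c" using le by (simp add: d_def)
    have id: "int d = int b + int c - int n * (int q - 1) - int k"
    proof -
      have "int d + int n * int (q - 1) + int k = int b + int c"
        using arg_cong[OF dd, of int] by simp
      then show ?thesis using iq by simp
    qed
    have Neq: "nat (int q * int n - lam - int k) = q * n + d"
    proof -
      from id have e: "int q * int n - lam - int k = int (q * n + d)" using lam' by (simp add: algebra_simps)
      show ?thesis by (simp only: e nat_int)
    qed
    have col': "is_coloring (q*n+d) q (q*(b+c) - t*c) (t*c) (gfun True t d)"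
      by (rule main_col[OF t1]) (use dd in simp)
    have "main_eigenvalue (q*n+d) q (q * (b + c) - t * c) (t * c) = lam - int k * (int q - 1)"
      unfolding ev[OF t1(2), of "q*n+d"] of_nat_add of_nat_mult id lam' by (simp add: algebra_simps)
    then show "\<exists>g. is_coloring (nat (int q * int n - lam - int k)) q (q * (b + c) - t * c) (t * c) g \<and>
         main_eigenvalue (nat (int q * int n - lam - int k)) q (q * (b + c) - t * c) (t * c) = lam - int k * (int q - 1)"
      unfolding Neq using col' by blast
  next
    fix t assume c2: "lam \<le> int k * (int q - 1)" and t: "t \<in> {1..q}"
    have t1: "1 \<le> t" "t \<le> q" using t by auto
    define d where "d = k * (q - 1) + b + c - n * (q - 1)"
    have le: "n * (q - 1) \<le> k * (q - 1) + b + c"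
    proof -
      have "int (n * (q - 1)) \<le> int (k * (q - 1)) + int b + int c" using c2 lam' iq by simp
      then show ?thesis by linarith
    qed
    have dd: "d + n * (q - 1) = k * (q - 1) + b + c" using le by (simp add: d_def)
    have id: "int d = int k * (int q - 1) + int b + int c - int n * (int q - 1)"
    proof -
      have "int d + int n * int (q - 1) = int k * int (q - 1) + int b + int c"
        using arg_cong[OF dd, of int] by simp
      then show ?thesis using iq by simp
    qed
    have Neq: "nat (int q * int n - lam + int k * (int q - 1)) = q * n + d"
    proof -
      have e: "int q * int n - lam + int k * (int q - 1) = int (q * n + d)" using lam' id by (simp add: algebra_simps)
      show ?thesis by (simp only: e nat_int)
    qed
    have col': "is_coloring (q*n+d) q (q*(b+c) - t*c) (t*c) (gfun False t d)"
      by (rule main_col[OF t1]) (use dd in simp)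
    have "main_eigenvalue (q*n+d) q (q * (b + c) - t * c) (t * c) = lam + int k * (int q - 1)^2"
      unfolding ev[OF t1(2), of "q*n+d"] of_nat_add of_nat_mult id lam' by (simp add: algebra_simps power2_eq_square)
    then show "\<exists>g. is_coloring (nat (int q * int n - lam + int k * (int q - 1))) q (q * (b + c) - t * c) (t * c) g \<and>
         main_eigenvalue (nat (int q * int n - lam + int k * (int q - 1))) q (q * (b + c) - t * c) (t * c) = lam + int k * (int q - 1)^2"
      unfolding Neq using col' by blast
  qed
qed

end
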